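(* Let $d=r=1$, assume (A1), and let $(\rho_n,h_n,\varepsilon_n)$ be positive numbers tending to $0$ with $T/h_n$ integers. Then there exists $c>0$, independent of $n$ and $\mu$, such that the density of $m^{\varepsilon_n}_{\rho_n,h_n}[\mu](t)$ satisfies $\|m^{\varepsilon_n}_{\rho_n,h_n}[\mu](\cdot,t)\|_{L^\infty(\mathbb{R})}\le c$ for all $t\in[0,T]$ and all $\mu\in C([0,T];\mathcal{P}_1(\mathbb{R}))$.
   Context: $\mathcal{P}_1(\mathbb{R})$: probability measures with finite first moment, 1-Wasserstein distance. Assumption (A1) (for $d=r=1$): $F,G:\mathbb{R}\times\mathcal{P}_1\to\mathbb{R}$ uniformly bounded, $F(\cdot,m),G(\cdot,m)\in C^2$ with first and second derivatives bounded uniformly in $x,m$; $\sigma:[0,T]\to\mathbb{R}$ continuous; $m_0$ absolutely continuous with essentially bounded compactly supported density. Grid $x_i=i\rho$, $t_k=kh$, $N=T/h$; $\beta_i$ the piecewise affine hat function with $\beta_i(x_j)=\delta_{ij}$; $I[f]=\sum_if_i\beta_i$. Discrete HJB: $v_{i,N}=G(x_i,\mu(T))$, $v_{i,k}=\inf_{\alpha\in\mathbb{R}}\big[\frac12(I[v_{\cdot,k+1}](x_i-h\alpha+\sqrt h\sigma(t_k))+I[v_{\cdot,k+1}](x_i-h\alpha-\sqrt h\sigma(t_k)))+\frac12h\alpha^2+hF(x_i,\mu(t_k))\big]$; $v_{\rho,h}[\mu](x,t)=I[v_{\cdot,[t/h]}](x)$; $v^\varepsilon_{\rho,h}[\mu](\cdot,t)=\phi_\varepsilon*v_{\rho,h}[\mu](\cdot,t)$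 with $\phi_\varepsilon=\varepsilon^{-1}\phi(\cdot/\varepsilon)$ for a fixed $\phi\in C_c^\infty(\mathbb{R})$, $\phi\ge0$, $\int\phi=1$. Discrete FP: $E_i=[x_i-\rho/2,x_i+\rho/2]$, $\Phi^{\pm}_{i,k}=x_i-hDv^\varepsilon_{\rho,h}[\mu](x_i,t_k)\pm\sqrt h\sigma(t_k)$, $m_{i,0}=\int_{E_i}m_0$, $m_{i,k+1}=\frac12\sum_j[\beta_i(\Phi^+_{j,k})+\beta_i(\Phi^-_{j,k})]m_{j,k}$. $m^\varepsilon_{\rho,h}[\mu](t_k)$ has density $\rho^{-1}\sum_im_{i,k}\mathbb{1}_{E_i}$, and $m^\varepsilon_{\rho,h}[\mu](t)=\frac{t_{k+1}-t}{h}m^\varepsilon_{\rho,h}[\mu](t_k)+\frac{t-t_k}{h}m^\varepsilon_{\rho,h}[\mu](t_{k+1})$ for $t\in[t_k,t_{k+1}]$. *)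

theory Defs
  imports "HOL-Analysis.Analysis" "HOL-Probability.Probability"
begin

definition P1 :: "real measure set" where
  "P1 = {m. prob_space m \<and> sets m = sets (borel :: real measure) \<and> integrable m (\<lambda>x. \<bar>x\<bar>)}"

definition couplings :: "real measure \<Rightarrow> real measure \<Rightarrow> (real \<times> real) measure set" where
  "couplings \<mu> \<nu> = {\<pi>. prob_space \<pi> \<and> sets \<pi> = sets (borel :: (real \<times> real) measure)
      \<and> distr \<pi> borel fst = \<mu> \<and> distr \<pi> borel snd = \<nu>}"

definition W1 :: "real measure \<Rightarrow> real measure \<Rightarrow> real" where
  "W1 \<mu> \<nu> = (INF \<pi>\<in>couplings \<mu> \<nu>. (\<integral>p. \<bar>fst p - snd p\<bar> \<partial>\<pi>))"

definition cont_P1 :: "real \<Rightarrow> (real \<Rightarrow> real measure) \<Rightarrow> bool" where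
  "cont_P1 T \<mu> \<longleftrightarrow> (\<forall>t\<in>{0..T}. \<mu> t \<in> P1) \<and>
     (\<forall>t\<in>{0..T}. \<forall>e>0. \<exists>d>0. \<forall>s\<in>{0..T}. \<bar>s - t\<bar> < d \<longrightarrow> W1 (\<mu> s) (\<mu> t) < e)"

definition C2_bdd :: "(real \<Rightarrow> real) \<Rightarrow> real \<Rightarrow> bool" where
  "C2_bdd f K \<longleftrightarrow> (\<forall>x. f differentiable (at x)) \<and> (\<forall>x. deriv f differentiable (at x))
     \<and> continuous_on UNIV (deriv (deriv f))
     \<and> (\<forall>x. \<bar>deriv f x\<bar> \<le> K \<and> \<bar>deriv (deriv f) x\<bar> \<le> K)"

definition assumption_A1 ::
  "real \<Rightarrow> (real \<Rightarrow> real measure \<Rightarrow> real) \<Rightarrow> (real \<Rightarrow> real measure \<Rightarrow> real)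
     \<Rightarrow> (real \<Rightarrow> real) \<Rightarrow> real measure \<Rightarrow> bool" where
  "assumption_A1 T F G \<sigma> m0 \<longleftrightarrow>
     (\<exists>K. \<forall>m\<in>P1. (\<forall>x. \<bar>F x m\<bar> \<le> K \<and> \<bar>G x m\<bar> \<le> K)
             \<and> C2_bdd (\<lambda>x. F x m) K \<and> C2_bdd (\<lambda>x. G x m) K)
   \<and> continuous_on {0..T} \<sigma>
   \<and> (\<exists>f0 :: real \<Rightarrow> real. f0 \<in> borel_measurable borel \<and> (\<forall>x. f0 x \<ge> 0)
        \<and> m0 = density lborel (\<lambda>x. ennreal (f0 x)) \<and> prob_space m0
        \<and> (\<exists>B. AE x in lborel. f0 x \<le> B)
        \<and> (\<exists>R. AE x in lborel. \<bar>x\<bar> > R \<longrightarrow> f0 x = 0))"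

definition mollifier :: "(real \<Rightarrow> real) \<Rightarrow> bool" where
  "mollifier \<phi> \<longleftrightarrow> (\<forall>k x. ((deriv ^^ k) \<phi>) differentiable (at x))
     \<and> (\<exists>R. \<forall>x. \<bar>x\<bar> > R \<longrightarrow> \<phi> x = 0) \<and> (\<forall>x. \<phi> x \<ge> 0)
     \<and> integrable lborel \<phi> \<and> (\<integral>x. \<phi> x \<partial>lborel) = 1"

definition gridN :: "real \<Rightarrow> real \<Rightarrow> nat" where
  "gridN T h = nat \<lfloor>T / h\<rfloor>"

definition hat :: "real \<Rightarrow> int \<Rightarrow> real \<Rightarrow> real" where
  "hat \<rho> i x = max 0 (1 - \<bar>x - of_int i * \<rho>\<bar> / \<rho>)"

definition interp :: "real \<Rightarrow> (int \<Rightarrow> real) \<Rightarrow> real \<Rightarrow> real" where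
  "interp \<rho> f x = infsum (\<lambda>i. f i * hat \<rho> i x) UNIV"

text \<open>hjb ... j = v_{.,N-j} (backward recursion, j steps from the terminal time)\<close>
fun hjb :: "real \<Rightarrow> real \<Rightarrow> real \<Rightarrow> (real \<Rightarrow> real) \<Rightarrow> (real \<Rightarrow> real measure \<Rightarrow> real)
    \<Rightarrow> (real \<Rightarrow> real measure \<Rightarrow> real) \<Rightarrow> (real \<Rightarrow> real measure) \<Rightarrow> nat \<Rightarrow> int \<Rightarrow> real" where
  "hjb \<rho> h T \<sigma> F G \<mu> 0 = (\<lambda>i. G (of_int i * \<rho>) (\<mu> T))"
| "hjb \<rho> h T \<sigma> F G \<mu> (Suc j) = (\<lambda>i.
     let tk = real (gridN T h - Suc j) * h; xi = of_int i * \<rho> in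
     (INF \<alpha>::real. (interp \<rho> (hjb \<rho> h T \<sigma> F G \<mu> j) (xi - h * \<alpha> + sqrt h * \<sigma> tk)
                   + interp \<rho> (hjb \<rho> h T \<sigma> F G \<mu> j) (xi - h * \<alpha> - sqrt h * \<sigma> tk)) / 2
                 + h * \<alpha>\<^sup>2 / 2 + h * F xi (\<mu> tk)))"

definition vgrid :: "real \<Rightarrow> real \<Rightarrow> real \<Rightarrow> (real \<Rightarrow> real) \<Rightarrow> (real \<Rightarrow> real measure \<Rightarrow> real)
    \<Rightarrow> (real \<Rightarrow> real measure \<Rightarrow> real) \<Rightarrow> (real \<Rightarrow> real measure) \<Rightarrow> nat \<Rightarrow> int \<Rightarrow> real" where
  "vgrid \<rho> h T \<sigma> F G \<mu> k = hjb \<rho> h T \<sigma> F G \<mu> (gridN T h - k)"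

definition vdisc :: "real \<Rightarrow> real \<Rightarrow> real \<Rightarrow> (real \<Rightarrow> real) \<Rightarrow> (real \<Rightarrow> real measure \<Rightarrow> real)
    \<Rightarrow> (real \<Rightarrow> real measure \<Rightarrow> real) \<Rightarrow> (real \<Rightarrow> real measure) \<Rightarrow> real \<Rightarrow> real \<Rightarrow> real" where
  "vdisc \<rho> h T \<sigma> F G \<mu> x t = interp \<rho> (vgrid \<rho> h T \<sigma> F G \<mu> (nat \<lfloor>t / h\<rfloor>)) x"

definition veps :: "(real \<Rightarrow> real) \<Rightarrow> real \<Rightarrow> real \<Rightarrow> real \<Rightarrow> real \<Rightarrow> (real \<Rightarrow> real)
    \<Rightarrow> (real \<Rightarrow> real measure \<Rightarrow> real) \<Rightarrow> (real \<Rightarrow> real measure \<Rightarrow> real) \<Rightarrow> (real \<Rightarrow> real measure)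
    \<Rightarrow> real \<Rightarrow> real \<Rightarrow> real" where
  "veps \<phi> \<epsilon> \<rho> h T \<sigma> F G \<mu> x t =
     (\<integral>y. (1 / \<epsilon>) * \<phi> ((x - y) / \<epsilon>) * vdisc \<rho> h T \<sigma> F G \<mu> y t \<partial>lborel)"

fun fp :: "(real \<Rightarrow> real) \<Rightarrow> real \<Rightarrow> real \<Rightarrow> real \<Rightarrow> real \<Rightarrow> (real \<Rightarrow> real)
    \<Rightarrow> (real \<Rightarrow> real measure \<Rightarrow> real) \<Rightarrow> (real \<Rightarrow> real measure \<Rightarrow> real) \<Rightarrow> real measure
    \<Rightarrow> (real \<Rightarrow> real measure) \<Rightarrow> nat \<Rightarrow> int \<Rightarrow> real" where
  "fp \<phi> \<epsilon> \<rho> h T \<sigma> F G m0 \<mu> 0 =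
     (\<lambda>i. measure m0 {of_int i * \<rho> - \<rho> / 2 .. of_int i * \<rho> + \<rho> / 2})"
| "fp \<phi> \<epsilon> \<rho> h T \<sigma> F G m0 \<mu> (Suc k) = (\<lambda>i.
     let tk = real k * h;
         Dv = (\<lambda>x. deriv (\<lambda>z. veps \<phi> \<epsilon> \<rho> h T \<sigma> F G \<mu> z tk) x);
         Phip = (\<lambda>j. of_int j * \<rho> - h * Dv (of_int j * \<rho>) + sqrt h * \<sigma> tk);
         Phim = (\<lambda>j. of_int j * \<rho> - h * Dv (of_int j * \<rho>) - sqrt h * \<sigma> tk)
     in (1 / 2) * infsum (\<lambda>j. (hat \<rho> i (Phip j) + hat \<rho> i (Phim j)) * fp \<phi> \<epsilon> \<rho> h T \<sigma> F G m0 \<mu> k j) UNIV)"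

definition dens_grid :: "(real \<Rightarrow> real) \<Rightarrow> real \<Rightarrow> real \<Rightarrow> real \<Rightarrow> real \<Rightarrow> (real \<Rightarrow> real)
    \<Rightarrow> (real \<Rightarrow> real measure \<Rightarrow> real) \<Rightarrow> (real \<Rightarrow> real measure \<Rightarrow> real) \<Rightarrow> real measure
    \<Rightarrow> (real \<Rightarrow> real measure) \<Rightarrow> nat \<Rightarrow> real \<Rightarrow> real" where
  "dens_grid \<phi> \<epsilon> \<rho> h T \<sigma> F G m0 \<mu> k x =
     (1 / \<rho>) * infsum (\<lambda>i. fp \<phi> \<epsilon> \<rho> h T \<sigma> F G m0 \<mu> k i
        * indicator {of_int i * \<rho> - \<rho> / 2 .. of_int i * \<rho> + \<rho> / 2} x) UNIV"

definition dens :: "(real \<Rightarrow> real) \<Rightarrow> real \<Rightarrow> real \<Rightarrow> real \<Rightarrow> real \<Rightarrow> (real \<Rightarrow> real)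
    \<Rightarrow> (real \<Rightarrow> real measure \<Rightarrow> real) \<Rightarrow> (real \<Rightarrow> real measure \<Rightarrow> real) \<Rightarrow> real measure
    \<Rightarrow> (real \<Rightarrow> real measure) \<Rightarrow> real \<Rightarrow> real \<Rightarrow> real" where
  "dens \<phi> \<epsilon> \<rho> h T \<sigma> F G m0 \<mu> t x =
     (let k = nat \<lfloor>t / h\<rfloor> in
        ((real (Suc k) * h - t) / h) * dens_grid \<phi> \<epsilon> \<rho> h T \<sigma> F G m0 \<mu> k x
      + ((t - real k * h) / h) * dens_grid \<phi> \<epsilon> \<rho> h T \<sigma> F G m0 \<mu> (Suc k) x)"

end

theory Submission
  imports Defs
begin

lemma hat_nonneg: "0 \<le> hat \<rho> i x" by (simp add: hat_def)

lemma hat_le1: "\<rho> > 0 \<Longrightarrow> hat \<rho> i x \<le> 1" by (simp add: hat_def)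

lemma hat_nz: assumes "\<rho> > 0" "hat \<rho> i x \<noteq> 0" shows "\<bar>x - of_int i * \<rho>\<bar> < \<rho>"
proof -
  have mx: "max 0 (y::real) \<noteq> 0 \<Longrightarrow> y > 0" for y by (auto simp: max_def split: if_splits)
  have "1 - \<bar>x - of_int i * \<rho>\<bar> / \<rho> > 0" using assms(2) unfolding hat_def by (rule mx)
  thus ?thesis using assms(1) by (simp add: field_simps)
qed

lemma interp_finite:
  assumes "finite S" "\<And>i. hat \<rho> i x \<noteq> 0 \<Longrightarrow> i \<in> S"
  shows "interp \<rho> f x = (\<Sum>i\<in>S. f i * hat \<rho> i x)"
proof -
  have "interp \<rho> f x = infsum (\<lambda>i. f i * hat \<rho> i x) S"
    unfolding interp_def by (rule infsum_cong_neutral) (use assms in auto)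
  also have "\<dots> = (\<Sum>i\<in>S. f i * hat \<rho> i x)" using assms(1) by (rule infsum_finite)
  finally show ?thesis .
qed

lemma interp_formula:
  assumes "\<rho> > 0"
  shows "interp \<rho> f x = (1 - (x/\<rho> - of_int \<lfloor>x/\<rho>\<rfloor>)) * f \<lfloor>x/\<rho>\<rfloor>
            + (x/\<rho> - of_int \<lfloor>x/\<rho>\<rfloor>) * f (\<lfloor>x/\<rho>\<rfloor> + 1)"
proof -
  define i0 where "i0 = \<lfloor>x/\<rho>\<rfloor>"
  define \<theta> where "\<theta> = x/\<rho> - of_int i0"
  have th: "0 \<le> \<theta>" "\<theta> < 1" unfolding \<theta>_def i0_def by linarith+
  have xe: "x = (of_int i0 + \<theta>) * \<rho>" using assms unfolding \<theta>_def by (simp add: field_simps)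
  have supp: "i \<in> {i0, i0+1}" if "hat \<rho> i x \<noteq> 0" for i
  proof -
    have "\<bar>x - of_int i * \<rho>\<bar> < \<rho>" using hat_nz[OF assms that] .
    hence "\<bar>(of_int i0 + \<theta> - of_int i) * \<rho>\<bar> < 1 * \<rho>" using xe by (simp add: algebra_simps)
    hence "\<bar>of_int i0 + \<theta> - of_int i\<bar> < 1" using assms by (simp add: abs_mult)
    hence "real_of_int i0 - 1 < real_of_int i \<and> real_of_int i < real_of_int i0 + 2" using th by linarith
    hence "i0 - 1 < i \<and> i < i0 + 2" by linarith
    thus ?thesis by auto
  qed
  have h0: "hat \<rho> i0 x = 1 - \<theta>"
  proof -
    have "x - of_int i0 * \<rho> = \<theta> * \<rho>" using xe by (simp add: algebra_simps)
    thus ?thesis using assms th by (simp add: hat_def abs_mult)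
  qed
  have h1: "hat \<rho> (i0+1) x = \<theta>"
  proof -
    have "x - of_int (i0+1) * \<rho> = (\<theta> - 1) * \<rho>" using xe by (simp add: algebra_simps)
    hence "\<bar>x - of_int (i0+1) * \<rho>\<bar> / \<rho> = 1 - \<theta>" using assms th by (simp add: abs_mult)
    thus ?thesis using th by (simp add: hat_def)
  qed
  have "interp \<rho> f x = (\<Sum>i\<in>{i0, i0+1}. f i * hat \<rho> i x)"
    by (rule interp_finite) (use supp in auto)
  also have "\<dots> = (1 - \<theta>) * f i0 + \<theta> * f (i0+1)" using h0 h1 by simp
  finally show ?thesis unfolding \<theta>_def i0_def .
qed

lemma floor_shift: assumes "\<rho> > 0" shows "\<lfloor>(x + \<rho>)/\<rho>\<rfloor> = \<lfloor>x/\<rho>\<rfloor> + 1" "(x+\<rho>)/\<rho> = x/\<rho> + 1"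
    "\<lfloor>(x - \<rho>)/\<rho>\<rfloor> = \<lfloor>x/\<rho>\<rfloor> - 1" "(x-\<rho>)/\<rho> = x/\<rho> - 1"
proof -
  show a: "(x+\<rho>)/\<rho> = x/\<rho> + 1" "(x-\<rho>)/\<rho> = x/\<rho> - 1" using assms by (simp_all add: field_simps)
  show "\<lfloor>(x + \<rho>)/\<rho>\<rfloor> = \<lfloor>x/\<rho>\<rfloor> + 1" unfolding a by simp
  show "\<lfloor>(x - \<rho>)/\<rho>\<rfloor> = \<lfloor>x/\<rho>\<rfloor> - 1" unfolding a by simp
qed

lemma interp_shift_plus: assumes "\<rho> > 0" shows "interp \<rho> f (x + \<rho>) = interp \<rho> (\<lambda>i. f (i+1)) x"
  using assms by (simp add: interp_formula floor_shift)

lemma interp_shift_minus: assumes "\<rho> > 0" shows "interp \<rho> f (x - \<rho>) = interp \<rho> (\<lambda>i. f (i-1)) x"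
  using assms by (simp add: interp_formula floor_shift)

lemma interp_diff: assumes "\<rho> > 0" shows "interp \<rho> f x - interp \<rho> g x = interp \<rho> (\<lambda>i. f i - g i) x"
  using assms by (simp add: interp_formula algebra_simps)

lemma interp_bound: assumes "\<rho> > 0" "\<And>i. \<bar>f i\<bar> \<le> B" shows "\<bar>interp \<rho> f x\<bar> \<le> B"
proof -
  define \<theta> where "\<theta> = x/\<rho> - of_int \<lfloor>x/\<rho>\<rfloor>"
  have th: "0 \<le> \<theta>" "\<theta> \<le> 1" unfolding \<theta>_def by linarith+
  have "\<bar>(1 - \<theta>) * f \<lfloor>x/\<rho>\<rfloor> + \<theta> * f (\<lfloor>x/\<rho>\<rfloor> + 1)\<bar> \<le> (1-\<theta>) * B + \<theta> * B"
  proof -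
    have "\<bar>(1 - \<theta>) * f \<lfloor>x/\<rho>\<rfloor>\<bar> \<le> (1-\<theta>) * B" using th assms(2) by (simp add: abs_mult mult_left_mono)
    moreover have "\<bar>\<theta> * f (\<lfloor>x/\<rho>\<rfloor> + 1)\<bar> \<le> \<theta> * B" using th assms(2) by (simp add: abs_mult mult_left_mono)
    ultimately show ?thesis by (smt (verit))
  qed
  thus ?thesis using assms(1) by (simp add: interp_formula \<theta>_def[symmetric] algebra_simps)
qed

lemma interp_SC: assumes "\<rho> > 0" "\<And>i. f (i+1) + f (i-1) - 2 * f i \<le> S"
  shows "interp \<rho> f (y+\<rho>) + interp \<rho> f (y-\<rho>) - 2 * interp \<rho> f y \<le> S"
proof -
  define i0 where "i0 = \<lfloor>y/\<rho>\<rfloor>"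
  define \<theta> where "\<theta> = y/\<rho> - of_int i0"
  have th: "0 \<le> \<theta>" "\<theta> \<le> 1" unfolding \<theta>_def i0_def by linarith+
  have e: "interp \<rho> f (y+\<rho>) + interp \<rho> f (y-\<rho>) - 2 * interp \<rho> f y
     = (1-\<theta>) * (f (i0+1) + f (i0-1) - 2 * f i0) + \<theta> * (f (i0+1+1) + f (i0+1-1) - 2 * f (i0+1))"
  proof -
    have p: "interp \<rho> f (y+\<rho>) = (1-\<theta>) * f (i0+1) + \<theta> * f (i0+1+1)"
      unfolding interp_shift_plus[OF assms(1)] unfolding interp_formula[OF assms(1)] i0_def[symmetric] \<theta>_def[symmetric] by simp
    have m: "interp \<rho> f (y-\<rho>) = (1-\<theta>) * f (i0-1) + \<theta> * f (i0+1-1)"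
      unfolding interp_shift_minus[OF assms(1)] unfolding interp_formula[OF assms(1)] i0_def[symmetric] \<theta>_def[symmetric] by simp
    have z: "interp \<rho> f y = (1-\<theta>) * f i0 + \<theta> * f (i0+1)"
      unfolding interp_formula[OF assms(1)] i0_def[symmetric] \<theta>_def[symmetric] by simp
    show ?thesis unfolding p m z by (simp add: algebra_simps)
  qed
  have "(1-\<theta>) * (f (i0+1) + f (i0-1) - 2 * f i0) \<le> (1-\<theta>) * S" using th assms(2) by (intro mult_left_mono) auto
  moreover have "\<theta> * (f (i0+1+1) + f (i0+1-1) - 2 * f (i0+1)) \<le> \<theta> * S" using th assms(2)[of "i0+1"] by (intro mult_left_mono) auto
  ultimately show ?thesis unfolding e by (simp add: algebra_simps)
qed

lemma int_mono_dec: fixes g :: "int \<Rightarrow> real" and i j :: int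
  assumes "\<And>i. g (i+1) \<le> g i" "i \<le> j" shows "g j \<le> g i"
  using assms(2)
proof (induction j rule: int_ge_induct)
  case base then show ?case by simp
next
  case (step j) then show ?case using assms(1)[of j] by linarith
qed

lemma interp_mono_dec: assumes "\<rho> > 0" "\<And>i. g (i+1) \<le> (g i :: real)" "y \<le> y'"
  shows "interp \<rho> g y' \<le> interp \<rho> g y"
proof -
  define i0 where "i0 = \<lfloor>y/\<rho>\<rfloor>"
  define \<theta> where "\<theta> = y/\<rho> - of_int i0"
  define i1 where "i1 = \<lfloor>y'/\<rho>\<rfloor>"
  define \<theta>' where "\<theta>' = y'/\<rho> - of_int i1"
  have th: "0 \<le> \<theta>" "\<theta> \<le> 1" "0 \<le> \<theta>'" "\<theta>' \<le> 1" unfolding \<theta>_def i0_def \<theta>'_def i1_def by linarith+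
  have yy: "y/\<rho> \<le> y'/\<rho>" using assms by (simp add: divide_right_mono)
  hence ii: "i0 \<le> i1" unfolding i0_def i1_def by (simp add: floor_mono)
  have I0: "interp \<rho> g y = g i0 + \<theta> * (g (i0+1) - g i0)"
    using assms(1) by (simp add: interp_formula i0_def[symmetric] \<theta>_def[symmetric] algebra_simps)
  have I1: "interp \<rho> g y' = g i1 + \<theta>' * (g (i1+1) - g i1)"
    using assms(1) by (simp add: interp_formula i1_def[symmetric] \<theta>'_def[symmetric] algebra_simps)
  show ?thesis
  proof (cases "i0 = i1")
    case True
    hence "\<theta> \<le> \<theta>'" using yy unfolding \<theta>_def \<theta>'_def by simp
    moreover have "g (i0+1) - g i0 \<le> 0" using assms(2)[of i0] by simp
    ultimately have "\<theta>' * (g (i0+1) - g i0) \<le> \<theta> * (g (i0+1) - g i0)" by (simp add: mult_right_mono_neg)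
    thus ?thesis using I0 I1 True by simp
  next
    case False
    hence "i0 + 1 \<le> i1" using ii by simp
    hence a: "g i1 \<le> g (i0+1)" using int_mono_dec[of g] assms(2) by blast
    have b: "interp \<rho> g y' \<le> g i1"
    proof -
      have "\<theta>' * (g (i1+1) - g i1) \<le> 0" using th assms(2)[of i1] by (simp add: mult_nonneg_nonpos)
      thus ?thesis using I1 by simp
    qed
    have c: "g (i0+1) \<le> interp \<rho> g y"
    proof -
      have "g i0 + \<theta> * (g (i0+1) - g i0) - g (i0+1) = (1 - \<theta>) * (g i0 - g (i0+1))" by (simp add: algebra_simps)
      moreover have "(1 - \<theta>) * (g i0 - g (i0+1)) \<ge> 0" using th assms(2)[of i0] by simp
      ultimately show ?thesis using I0 by simp
    qed
    show ?thesis using a b c by simp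
  qed
qed

lemma interp_slope: assumes "\<rho> > 0" "\<And>i. e (i+1) - e i \<le> a * \<rho>" "y \<le> y'"
  shows "interp \<rho> e y' - interp \<rho> e y \<le> a * (y' - y)"
proof -
  define g where "g i = e i - a * (of_int i * \<rho>)" for i
  have gi: "interp \<rho> g z = interp \<rho> e z - a * z" for z
  proof -
    define i0 where "i0 = \<lfloor>z/\<rho>\<rfloor>"
    define \<theta> where "\<theta> = z/\<rho> - of_int i0"
    have zz: "(of_int i0 + \<theta>) * \<rho> = z" using assms(1) unfolding \<theta>_def by (simp add: field_simps)
    have "interp \<rho> g z = (1-\<theta>) * g i0 + \<theta> * g (i0+1)"
      unfolding interp_formula[OF assms(1)] i0_def[symmetric] \<theta>_def[symmetric] by simp
    also have "\<dots> = ((1-\<theta>) * e i0 + \<theta> * e (i0+1)) - a * ((of_int i0 + \<theta>) * \<rho>)"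
      unfolding g_def by (simp add: algebra_simps)
    also have "(1-\<theta>) * e i0 + \<theta> * e (i0+1) = interp \<rho> e z"
      unfolding interp_formula[OF assms(1)] i0_def[symmetric] \<theta>_def[symmetric] by simp
    finally show ?thesis unfolding zz .
  qed
  have "g (i+1) \<le> g i" for i using assms(2)[of i] unfolding g_def by (simp add: algebra_simps)
  hence "interp \<rho> g y' \<le> interp \<rho> g y" using interp_mono_dec assms by blast
  thus ?thesis unfolding gi by (simp add: algebra_simps)
qed

lemma interp_cont: assumes "\<rho> > 0" shows "isCont (interp \<rho> f) x0"
proof -
  define i0 where "i0 = \<lfloor>x0/\<rho>\<rfloor>"
  have loc: "interp \<rho> f x = (\<Sum>i\<in>{i0-1..i0+2}. f i * hat \<rho> i x)" if "x \<in> ball x0 \<rho>" for x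
  proof (rule interp_finite)
    show "finite {i0-1..i0+2}" by simp
    fix i assume "hat \<rho> i x \<noteq> 0"
    hence a: "\<bar>x - of_int i * \<rho>\<bar> < \<rho>" using hat_nz assms by blast
    have b: "\<bar>x0 - x\<bar> < \<rho>" using that by (simp add: dist_real_def)
    from a b have "\<bar>x0 - of_int i * \<rho>\<bar> < 2 * \<rho>" by linarith
    moreover have "x0/\<rho> - of_int i = (x0 - of_int i * \<rho>)/\<rho>" using assms by (simp add: diff_divide_distrib)
    hence "\<bar>x0/\<rho> - of_int i\<bar> = \<bar>x0 - of_int i * \<rho>\<bar>/\<rho>" using assms by (simp add: abs_divide)
    ultimately have "\<bar>x0/\<rho> - of_int i\<bar> < 2" using assms by (simp add: pos_divide_less_eq)
    moreover have fc: "of_int i0 \<le> x0/\<rho>" "x0/\<rho> < of_int i0 + 1" unfolding i0_def by linarith+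
    ultimately have "real_of_int i0 - 2 < of_int i \<and> of_int i < real_of_int i0 + 3" unfolding abs_less_iff by linarith
    hence "i0 - 1 \<le> i \<and> i \<le> i0 + 2" by linarith
    thus "i \<in> {i0-1..i0+2}" by simp
  qed
  have "continuous_on (ball x0 \<rho>) (\<lambda>x. \<Sum>i\<in>{i0-1..i0+2}. f i * hat \<rho> i x)"
    unfolding hat_def using assms by (intro continuous_intros) auto
  hence "continuous_on (ball x0 \<rho>) (interp \<rho> f)" by (rule continuous_on_eq) (use loc in auto)
  thus ?thesis using assms by (metis centre_in_ball continuous_on_eq_continuous_at open_ball)
qed

lemma deriv_le_from_slope:
  fixes f :: "real \<Rightarrow> real"
  assumes "(f has_real_derivative D) (at x)" "\<And>y. y > x \<Longrightarrow> f y - f x \<le> a * (y - x)"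
  shows "D \<le> a"
proof -
  have "((\<lambda>h. (f (x + h) - f x) / h) \<longlongrightarrow> D) (at 0)" using DERIV_D[OF assms(1)] .
  hence lim: "((\<lambda>h. (f (x + h) - f x) / h) \<longlongrightarrow> D) (at_right 0)"
    using tendsto_mono at_le by (metis at_right_to_0 at_within_open at_within_le_at open_UNIV UNIV_I)
  have "eventually (\<lambda>h. (f (x + h) - f x) / h \<le> a) (at_right (0::real))"
    unfolding eventually_at_right_less
  proof -
    show "\<forall>\<^sub>F h in at_right 0. (f (x + h) - f x) / h \<le> a"
      using eventually_at_right_less[of 0] 
    proof (rule eventually_mono)
      fix h :: real assume "0 < h"
      hence "f (x + h) - f x \<le> a * h" using assms(2)[of "x+h"] by simp
      thus "(f (x + h) - f x) / h \<le> a" using \<open>0 < h\<close> by (simp add: divide_le_eq)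
    qed
  qed
  thus ?thesis using tendsto_upperbound[OF lim] by simp
qed

lemma lborel_box:
  fixes k :: "real \<Rightarrow> real"
  assumes "continuous_on UNIV k" "\<And>y. y \<notin> {a..b} \<Longrightarrow> k y = 0"
  shows "integrable lborel k" "integral\<^sup>L lborel k = integral {a..b} k"
proof -
  have "k y = indicator {a..b} y *\<^sub>R k y" for y using assms(2)[of y] by (cases "y \<in> {a..b}") auto
  hence e: "k = (\<lambda>y. indicator {a..b} y *\<^sub>R k y)" by (rule ext)
  have "integrable lborel (\<lambda>y. indicator {a..b} y *\<^sub>R k y)"
    by (rule borel_integrable_compact) (auto intro: continuous_on_subset[OF assms(1)])
  thus i: "integrable lborel k" using e by simp
  have "integral\<^sup>L lborel k = integral UNIV k" using integral_lborel[OF i] by simp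
  also have "\<dots> = integral UNIV (\<lambda>y. if y \<in> {a..b} then k y else 0)"
    by (rule arg_cong[where f="integral UNIV"]) (use assms(2) in auto)
  also have "\<dots> = integral {a..b} k" by (rule integral_restrict_UNIV)
  finally show "integral\<^sup>L lborel k = integral {a..b} k" .
qed

definition cv :: "(real \<Rightarrow> real) \<Rightarrow> real \<Rightarrow> (real \<Rightarrow> real) \<Rightarrow> real \<Rightarrow> real" where
  "cv \<phi> \<epsilon> g x = (\<integral>y. (1 / \<epsilon>) * \<phi> ((x - y) / \<epsilon>) * g y \<partial>lborel)"

lemma cv_subst: "cv \<phi> \<epsilon> g x = (\<integral>z. (1 / \<epsilon>) * \<phi> (z / \<epsilon>) * g (x - z) \<partial>lborel)"
  unfolding cv_def using lborel_integral_real_affine[where c="-1" and t=x,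
      of "\<lambda>y. (1 / \<epsilon>) * \<phi> ((x - y) / \<epsilon>) * g y"] by simp


context
  fixes \<phi> \<phi>' :: "real \<Rightarrow> real" and \<epsilon> R Pm :: real
  assumes pc: "continuous_on UNIV \<phi>"
    and pd: "\<And>x. (\<phi> has_real_derivative \<phi>' x) (at x)"
    and p'c: "continuous_on UNIV \<phi>'"
    and ps: "\<And>x. \<bar>x\<bar> > R \<Longrightarrow> \<phi> x = 0"
    and pn: "\<And>x. \<phi> x \<ge> 0"
    and pint: "integral\<^sup>L lborel \<phi> = 1"
    and ep: "\<epsilon> > 0"
    and Pm: "\<And>x. \<bar>\<phi>' x\<bar> \<le> Pm"
begin

lemma ker_int:
  assumes "continuous_on UNIV g"
  shows "integrable lborel (\<lambda>z. (1 / \<epsilon>) * \<phi> (z / \<epsilon>) * g z)"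
proof (rule lborel_box(1)[where a="-\<epsilon>*R" and b="\<epsilon>*R"])
  show "continuous_on UNIV (\<lambda>z. (1 / \<epsilon>) * \<phi> (z / \<epsilon>) * g z)"
    using ep by (intro continuous_intros continuous_on_compose2[OF pc] assms) auto
  fix y assume "y \<notin> {- \<epsilon> * R..\<epsilon> * R}"
  hence "\<bar>y\<bar> > \<epsilon> * R" by auto
  hence "\<bar>y / \<epsilon>\<bar> > R" using ep by (simp add: abs_divide pos_less_divide_eq[OF ep] mult.commute[of R])
  thus "1 / \<epsilon> * \<phi> (y / \<epsilon>) * g y = 0" using ps by simp
qed

lemma ker_one: "(\<integral>z. (1 / \<epsilon>) * \<phi> (z / \<epsilon>) \<partial>lborel) = 1"
proof -
  have "(\<integral>z. (1 / \<epsilon>) * \<phi> (z / \<epsilon>) \<partial>lborel) = \<bar>\<epsilon>\<bar> *\<^sub>R (\<integral>z. (1 / \<epsilon>) * \<phi> ((0 + \<epsilon> * z) / \<epsilon>) \<partial>lborel)"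
    using lborel_integral_real_affine[where c=\<epsilon> and t=0, of "\<lambda>z. (1 / \<epsilon>) * \<phi> (z / \<epsilon>)"] ep by simp
  also have "\<dots> = integral\<^sup>L lborel \<phi>" using ep by simp
  finally show ?thesis using pint by simp
qed

lemma cv_mono:
  assumes wc: "continuous_on UNIV w"
    and sl: "\<And>y y'. y \<le> y' \<Longrightarrow> (w (y'+\<rho>) - w y') - (w (y+\<rho>) - w y) \<le> a * (y' - y)"
    and xx: "x \<le> x'"
  shows "(cv \<phi> \<epsilon> w (x'+\<rho>) - cv \<phi> \<epsilon> w x') - (cv \<phi> \<epsilon> w (x+\<rho>) - cv \<phi> \<epsilon> w x) \<le> a * (x' - x)"
proof -
  define k where "k z = (1 / \<epsilon>) * \<phi> (z / \<epsilon>)" for z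
  have ii: "integrable lborel (\<lambda>z. k z * w (c - z))" for c
  proof -
    have "continuous_on UNIV (\<lambda>z. w (c - z))" by (intro continuous_on_compose2[OF wc] continuous_intros) auto
    from ker_int[OF this] show ?thesis unfolding k_def .
  qed
  have cs: "cv \<phi> \<epsilon> w c = (\<integral>z. k z * w (c - z) \<partial>lborel)" for c unfolding cv_subst k_def ..
  have "(cv \<phi> \<epsilon> w (x'+\<rho>) - cv \<phi> \<epsilon> w x') - (cv \<phi> \<epsilon> w (x+\<rho>) - cv \<phi> \<epsilon> w x)
     = (\<integral>z. k z * w (x'+\<rho> - z) - k z * w (x' - z) - k z * w (x+\<rho> - z) + k z * w (x - z) \<partial>lborel)"
    unfolding cs using ii by (simp add: integral_add integral_diff)
  also have "\<dots> = (\<integral>z. k z * ((w (x' - z + \<rho>) - w (x' - z)) - (w (x - z + \<rho>) - w (x - z))) \<partial>lborel)"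
    by (rule Bochner_Integration.integral_cong) (auto simp: algebra_simps)
  also have "\<dots> \<le> (\<integral>z. k z * (a * (x' - x)) \<partial>lborel)"
  proof (rule integral_mono)
    show "integrable lborel (\<lambda>z. k z * ((w (x' - z + \<rho>) - w (x' - z)) - (w (x - z + \<rho>) - w (x - z))))"
    proof -
      have "(\<lambda>z. k z * ((w (x' - z + \<rho>) - w (x' - z)) - (w (x - z + \<rho>) - w (x - z))))
          = (\<lambda>z. k z * w (x'+\<rho> - z) - k z * w (x' - z) - k z * w (x+\<rho> - z) + k z * w (x - z))"
        by (auto simp: algebra_simps)
      thus ?thesis using ii by simp
    qed
    show "integrable lborel (\<lambda>z. k z * (a * (x' - x)))"
      using ker_int[of "\<lambda>_. a * (x' - x)"] unfolding k_def by simp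
    fix z
    have "k z \<ge> 0" unfolding k_def using ep pn by simp
    moreover have "(w (x' - z + \<rho>) - w (x' - z)) - (w (x - z + \<rho>) - w (x - z)) \<le> a * (x' - x)"
      using sl[of "x - z" "x' - z"] xx by simp
    ultimately show "k z * ((w (x' - z + \<rho>) - w (x' - z)) - (w (x - z + \<rho>) - w (x - z))) \<le> k z * (a * (x' - x))"
      by (rule mult_left_mono[rotated])
  qed
  also have "\<dots> = a * (x' - x)" using ker_one unfolding k_def by simp
  finally show ?thesis .
qed

lemma cv_deriv:
  assumes gc: "continuous_on UNIV g" and gb: "\<And>y. \<bar>g y\<bar> \<le> B" and R0: "R \<ge> 0"
  shows "\<exists>D. (cv \<phi> \<epsilon> g has_real_derivative D) (at x0) \<and> \<bar>D\<bar> \<le> (2 + 2 * \<epsilon> * R) * ((1/\<epsilon>) * (Pm * (1/\<epsilon>)) * B)"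
proof -
  define a where "a = x0 - 1 - \<epsilon> * R"
  define b where "b = x0 + 1 + \<epsilon> * R"
  define U where "U = ball x0 (1::real)"
  define f where "f x t = (1 / \<epsilon>) * \<phi> ((x - t) / \<epsilon>) * g t" for x t
  define fx where "fx x t = (1 / \<epsilon>) * (\<phi>' ((x - t) / \<epsilon>) * (1 / \<epsilon>)) * g t" for x t
  have Pm0: "0 \<le> Pm" using Pm[of 0] by (meson abs_ge_zero order_trans)
  have ab: "a \<le> b" unfolding a_def b_def using ep R0 by simp
  have fd: "((\<lambda>x. f x t) has_real_derivative fx x t) (at x within U)" for x t
  proof -
    have "((\<lambda>x. \<phi> ((x - t) / \<epsilon>)) has_real_derivative \<phi>' ((x - t) / \<epsilon>) * (1 / \<epsilon>)) (at x)"
      by (rule DERIV_chain2[OF pd]) (use ep in \<open>auto intro!: derivative_eq_intros\<close>)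
    from DERIV_cmult_right[OF DERIV_cmult[OF this, of "1/\<epsilon>"], of "g t"]
    show ?thesis unfolding f_def fx_def by (rule has_field_derivative_at_within)
  qed
  have fcont: "continuous_on UNIV (f x)" for x
    unfolding f_def using ep by (intro continuous_intros continuous_on_compose2[OF pc] gc) auto
  have fi: "f x integrable_on cbox a b" for x
    unfolding cbox_interval by (rule integrable_continuous_interval) (rule continuous_on_subset[OF fcont], simp)
  have fxc: "continuous_on (U \<times> cbox a b) (\<lambda>(x, t). fx x t)"
  proof -
    have "continuous_on (U \<times> cbox a b) (\<lambda>z. (1 / \<epsilon>) * (\<phi>' ((fst z - snd z) / \<epsilon>) * (1 / \<epsilon>)) * g (snd z))"
      using ep by (intro continuous_intros continuous_on_compose2[OF p'c] continuous_on_compose2[OF gc]) auto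
    thus ?thesis unfolding fx_def by (simp add: case_prod_beta)
  qed
  have L: "((\<lambda>x. integral (cbox a b) (f x)) has_real_derivative integral (cbox a b) (fx x0)) (at x0 within U)"
    by (rule leibniz_rule_field_derivative[OF fd fi fxc]) (simp_all add: U_def)
  hence L': "((\<lambda>x. integral (cbox a b) (f x)) has_real_derivative integral (cbox a b) (fx x0)) (at x0)"
  proof -
    have "at x0 within U = at x0" by (rule at_within_open) (simp_all add: U_def)
    with L show ?thesis by simp
  qed
  have eq: "integral (cbox a b) (f x) = cv \<phi> \<epsilon> g x" if "x \<in> U" for x
  proof -
    have "integral\<^sup>L lborel (f x) = integral {a..b} (f x)"
    proof (rule lborel_box(2)[OF fcont])
      fix y assume "y \<notin> {a..b}"
      moreover have "\<bar>x - x0\<bar> < 1" using that unfolding U_def by (simp add: dist_real_def abs_minus_commute)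
      ultimately have "\<bar>x - y\<bar> > \<epsilon> * R" unfolding a_def b_def by auto
      hence "\<bar>(x - y) / \<epsilon>\<bar> > R" using ep by (simp add: abs_divide pos_less_divide_eq[OF ep] mult.commute[of R])
      thus "f x y = 0" unfolding f_def using ps by simp
    qed
    thus ?thesis unfolding cv_def f_def cbox_interval by (rule sym)
  qed
  have D: "(cv \<phi> \<epsilon> g has_real_derivative integral (cbox a b) (fx x0)) (at x0)"
    by (rule has_field_derivative_transform_within_open[OF L', of U]) (use eq in \<open>simp_all add: U_def\<close>)
  have "\<bar>integral {a..b} (fx x0)\<bar> \<le> ((1/\<epsilon>) * (Pm * (1/\<epsilon>)) * B) * (b - a)"
  proof -
    have "norm (integral {a..b} (fx x0)) \<le> ((1/\<epsilon>) * (Pm * (1/\<epsilon>)) * B) * (b - a)"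
    proof (rule integral_bound[OF ab])
      show "continuous_on {a..b} (fx x0)" unfolding fx_def
        using ep by (intro continuous_intros continuous_on_compose2[OF p'c] continuous_on_compose2[OF gc]) auto
      fix t
      have "\<bar>fx x0 t\<bar> = (1/\<epsilon>) * (\<bar>\<phi>' ((x0 - t) / \<epsilon>)\<bar> * (1/\<epsilon>)) * \<bar>g t\<bar>"
        unfolding fx_def using ep by (simp add: abs_mult)
      also have "\<dots> \<le> (1/\<epsilon>) * (Pm * (1/\<epsilon>)) * B"
        using ep Pm gb Pm0 by (intro mult_mono) (auto simp: zero_le_divide_iff)
      finally show "norm (fx x0 t) \<le> (1/\<epsilon>) * (Pm * (1/\<epsilon>)) * B" by simp
    qed
    thus ?thesis by simp
  qed
  moreover have "b - a = 2 + 2 * \<epsilon> * R" unfolding a_def b_def by simp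
  ultimately show ?thesis using D by (intro exI[of _ "integral (cbox a b) (fx x0)"]) (auto simp: cbox_interval mult.commute)
qed

end

lemma C2_SC:
  fixes g :: "real \<Rightarrow> real"
  assumes "C2_bdd g K" "d \<ge> 0"
  shows "g (x + d) + g (x - d) - 2 * g x \<le> K * d^2"
proof -
  have g1: "(g has_real_derivative deriv g y) (at y)" for y
    using assms(1) unfolding C2_bdd_def by (simp add: DERIV_deriv_iff_real_differentiable)
  have g2: "(deriv g has_real_derivative deriv (deriv g) y) (at y)" for y
    using assms(1) unfolding C2_bdd_def by (simp add: DERIV_deriv_iff_real_differentiable)
  have lip: "\<bar>deriv g a - deriv g b\<bar> \<le> K * \<bar>a - b\<bar>" for a b
  proof -
    have "norm (deriv g a - deriv g b) \<le> K * norm (a - b)"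
      by (rule field_differentiable_bound[of UNIV _ "deriv (deriv g)"])
         (use g2 assms(1) in \<open>auto simp: C2_bdd_def has_field_derivative_at_within\<close>)
    thus ?thesis by simp
  qed
  define k where "k s = g (x + s) + g (x - s) - 2 * g x - K * s^2" for s
  have kd: "(k has_real_derivative (deriv g (x + s) - deriv g (x - s) - K * (2 * s))) (at s)" for s
  proof -
    have a0: "((\<lambda>s. g (x + s)) has_real_derivative deriv g (x + s) * 1) (at s)"
      by (rule DERIV_chain2[OF g1]) (auto intro!: derivative_eq_intros)
    hence a: "((\<lambda>s. g (x + s)) has_real_derivative deriv g (x + s)) (at s)" by simp
    have b: "((\<lambda>s. g (x - s)) has_real_derivative deriv g (x - s) * (-1)) (at s)"
      by (rule DERIV_chain2[OF g1]) (auto intro!: derivative_eq_intros)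
    have c: "((\<lambda>s. K * s ^ 2) has_real_derivative K * (2 * s)) (at s)" by (auto intro!: derivative_eq_intros)
    from DERIV_diff[OF DERIV_diff[OF DERIV_add[OF a b] DERIV_const[of "2 * g x"]] c]
    show ?thesis unfolding k_def by simp
  qed
  have "k d \<le> k 0"
  proof (rule DERIV_nonpos_imp_nonincreasing[OF assms(2)])
    fix s assume s: "0 \<le> s" "s \<le> d"
    have "deriv g (x + s) - deriv g (x - s) \<le> K * \<bar>(x + s) - (x - s)\<bar>" using lip[of "x+s" "x-s"] by linarith
    hence "deriv g (x + s) - deriv g (x - s) - K * (2 * s) \<le> 0" using s by simp
    thus "\<exists>y. (k has_real_derivative y) (at s) \<and> y \<le> 0" using kd by blast
  qed
  thus ?thesis unfolding k_def by simp
qed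


definition tkf :: "real \<Rightarrow> real \<Rightarrow> nat \<Rightarrow> real" where "tkf T h j = real (gridN T h - Suc j) * h"

definition Qf where "Qf \<rho> h T \<sigma> F G \<mu> j i \<alpha> =
   (interp \<rho> (hjb \<rho> h T \<sigma> F G \<mu> j) (of_int i * \<rho> - h * \<alpha> + sqrt h * \<sigma> (tkf T h j))
  + interp \<rho> (hjb \<rho> h T \<sigma> F G \<mu> j) (of_int i * \<rho> - h * \<alpha> - sqrt h * \<sigma> (tkf T h j))) / 2
  + h * \<alpha>\<^sup>2 / 2 + h * F (of_int i * \<rho>) (\<mu> (tkf T h j))"

lemma hjb_Suc': "hjb \<rho> h T \<sigma> F G \<mu> (Suc j) i = (INF \<alpha>. Qf \<rho> h T \<sigma> F G \<mu> j i \<alpha>)"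
  by (simp add: Qf_def tkf_def Let_def)

lemma gridN_le: assumes "h > 0" "T \<ge> 0" shows "real (gridN T h) * h \<le> T"
proof -
  have "real (gridN T h) = of_int \<lfloor>T/h\<rfloor>" unfolding gridN_def using assms by simp
  also have "\<dots> \<le> T / h" by simp
  finally show ?thesis using assms by (simp add: le_divide_eq)
qed

context
  fixes \<rho> h T :: real and \<sigma> :: "real \<Rightarrow> real" and F G :: "real \<Rightarrow> real measure \<Rightarrow> real"
    and \<mu> :: "real \<Rightarrow> real measure" and K :: real
  assumes rp: "\<rho> > 0" and hp: "h > 0" and T0: "T \<ge> 0"
    and Kb: "\<And>m. m \<in> P1 \<Longrightarrow> (\<forall>x. \<bar>F x m\<bar> \<le> K \<and> \<bar>G x m\<bar> \<le> K) \<and> C2_bdd (\<lambda>x. F x m) K \<and> C2_bdd (\<lambda>x. G x m) K"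
    and \<mu>P: "\<And>t. t \<in> {0..T} \<Longrightarrow> \<mu> t \<in> P1"
begin

lemma tk_in: "tkf T h j \<in> {0..T}"
proof -
  have "real (gridN T h - Suc j) * h \<le> real (gridN T h) * h" using hp by (intro mult_right_mono) auto
  hence "real (gridN T h - Suc j) * h \<le> T" using gridN_le[OF hp T0] by linarith
  thus ?thesis using hp unfolding tkf_def by simp
qed

lemma Fb: "\<bar>F x (\<mu> (tkf T h j))\<bar> \<le> K" using Kb[OF \<mu>P[OF tk_in]] by blast
lemma FC2: "C2_bdd (\<lambda>x. F x (\<mu> (tkf T h j))) K" using Kb[OF \<mu>P[OF tk_in]] by blast
lemma Gb: "\<bar>G x (\<mu> T)\<bar> \<le> K" using Kb[OF \<mu>P] T0 by auto
lemma GC2: "C2_bdd (\<lambda>x. G x (\<mu> T)) K" using Kb[OF \<mu>P] T0 by auto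

lemma Q_lower:
  assumes "\<And>i. \<bar>hjb \<rho> h T \<sigma> F G \<mu> j i\<bar> \<le> B"
  shows "Qf \<rho> h T \<sigma> F G \<mu> j i \<alpha> \<ge> - B - h * K"
proof -
  define I1 where "I1 = interp \<rho> (hjb \<rho> h T \<sigma> F G \<mu> j) (of_int i * \<rho> - h * \<alpha> + sqrt h * \<sigma> (tkf T h j))"
  define I2 where "I2 = interp \<rho> (hjb \<rho> h T \<sigma> F G \<mu> j) (of_int i * \<rho> - h * \<alpha> - sqrt h * \<sigma> (tkf T h j))"
  define Fv where "Fv = F (of_int i * \<rho>) (\<mu> (tkf T h j))"
  have e: "Qf \<rho> h T \<sigma> F G \<mu> j i \<alpha> = (I1 + I2) / 2 + h * \<alpha>\<^sup>2 / 2 + h * Fv"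
    unfolding Qf_def I1_def I2_def Fv_def ..
  have a1: "\<bar>I1\<bar> \<le> B" unfolding I1_def by (rule interp_bound[OF rp assms])
  have a2: "\<bar>I2\<bar> \<le> B" unfolding I2_def by (rule interp_bound[OF rp assms])
  have fv: "\<bar>Fv\<bar> \<le> K" unfolding Fv_def by (rule Fb)
  have b: "h * Fv \<ge> - (h * K)"
  proof -
    have "h * (- K) \<le> h * Fv" using fv hp by (intro mult_left_mono) auto
    thus ?thesis by simp
  qed
  have c: "h * \<alpha>\<^sup>2 / 2 \<ge> 0" using hp by simp
  show ?thesis unfolding e using a1 a2 b c unfolding abs_le_iff by argo
qed

lemma HB: "\<bar>hjb \<rho> h T \<sigma> F G \<mu> j i\<bar> \<le> K * (1 + real j * h)"
proof (induction j arbitrary: i)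
  case 0 then show ?case using Gb by simp
next
  case (Suc j)
  define B where "B = K * (1 + real j * h)"
  have IH: "\<And>i. \<bar>hjb \<rho> h T \<sigma> F G \<mu> j i\<bar> \<le> B" using Suc unfolding B_def .
  have low: "Qf \<rho> h T \<sigma> F G \<mu> j i \<alpha> \<ge> - B - h * K" for \<alpha> by (rule Q_lower[OF IH])
  have bdd: "bdd_below (range (Qf \<rho> h T \<sigma> F G \<mu> j i))" using low by (intro bdd_belowI2) 
  have l: "(INF \<alpha>. Qf \<rho> h T \<sigma> F G \<mu> j i \<alpha>) \<ge> - B - h * K" using low by (intro cINF_greatest) auto
  have "(INF \<alpha>. Qf \<rho> h T \<sigma> F G \<mu> j i \<alpha>) \<le> Qf \<rho> h T \<sigma> F G \<mu> j i 0" by (rule cINF_lower[OF bdd]) simp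
  also have "\<dots> \<le> B + h * K"
  proof -
    define I1 where "I1 = interp \<rho> (hjb \<rho> h T \<sigma> F G \<mu> j) (of_int i * \<rho> - h * 0 + sqrt h * \<sigma> (tkf T h j))"
    define I2 where "I2 = interp \<rho> (hjb \<rho> h T \<sigma> F G \<mu> j) (of_int i * \<rho> - h * 0 - sqrt h * \<sigma> (tkf T h j))"
    define Fv where "Fv = F (of_int i * \<rho>) (\<mu> (tkf T h j))"
    have e: "Qf \<rho> h T \<sigma> F G \<mu> j i 0 = (I1 + I2) / 2 + h * 0\<^sup>2 / 2 + h * Fv"
      unfolding Qf_def I1_def I2_def Fv_def ..
    have a1: "\<bar>I1\<bar> \<le> B" unfolding I1_def by (rule interp_bound[OF rp IH])
    have a2: "\<bar>I2\<bar> \<le> B" unfolding I2_def by (rule interp_bound[OF rp IH])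
    have b: "h * Fv \<le> h * K" using Fb[of "of_int i * \<rho>" j] hp unfolding Fv_def
      by (intro mult_left_mono) auto
    show ?thesis unfolding e using a1 a2 b unfolding abs_le_iff by simp argo
  qed
  finally have u: "(INF \<alpha>. Qf \<rho> h T \<sigma> F G \<mu> j i \<alpha>) \<le> B + h * K" .
  have "B + h * K = K * (1 + real (Suc j) * h)" unfolding B_def by (simp add: algebra_simps)
  thus ?case unfolding hjb_Suc' using l u unfolding abs_le_iff by linarith
qed


lemma Q_bdd: "bdd_below (range (Qf \<rho> h T \<sigma> F G \<mu> j i))"
proof -
  have "Qf \<rho> h T \<sigma> F G \<mu> j i \<alpha> \<ge> - (K * (1 + real j * h)) - h * K" for \<alpha>
    by (rule Q_lower) (rule HB)
  thus ?thesis by (intro bdd_belowI2)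
qed

lemma HS: "hjb \<rho> h T \<sigma> F G \<mu> j (i+1) + hjb \<rho> h T \<sigma> F G \<mu> j (i-1) - 2 * hjb \<rho> h T \<sigma> F G \<mu> j i
    \<le> K * \<rho>\<^sup>2 * (1 + real j * h)"
proof (induction j arbitrary: i)
  case 0
  have xi: "of_int (i+1) * \<rho> = of_int i * \<rho> + \<rho>" "of_int (i-1) * \<rho> = of_int i * \<rho> - \<rho>"
    by (simp_all add: algebra_simps)
  show ?case unfolding hjb.simps xi using C2_SC[OF GC2, of \<rho> "of_int i * \<rho>"] rp by simp
next
  case (Suc j)
  define S where "S = K * \<rho>\<^sup>2 * (1 + real j * h)"
  define f where "f = hjb \<rho> h T \<sigma> F G \<mu> j"
  define tk where "tk = tkf T h j"
  define Fq where "Fq x = F x (\<mu> tk)" for x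
  have IH: "f (i'+1) + f (i'-1) - 2 * f i' \<le> S" for i' using Suc unfolding S_def f_def .
  have xi: "of_int (i+1) * \<rho> = of_int i * \<rho> + \<rho>" "of_int (i-1) * \<rho> = of_int i * \<rho> - \<rho>"
    by (simp_all add: algebra_simps)
  have key: "Qf \<rho> h T \<sigma> F G \<mu> j (i+1) \<alpha> + Qf \<rho> h T \<sigma> F G \<mu> j (i-1) \<alpha> - 2 * Qf \<rho> h T \<sigma> F G \<mu> j i \<alpha>
      \<le> S + h * K * \<rho>\<^sup>2" for \<alpha>
  proof -
    define y1 where "y1 = of_int i * \<rho> - h * \<alpha> + sqrt h * \<sigma> tk"
    define y2 where "y2 = of_int i * \<rho> - h * \<alpha> - sqrt h * \<sigma> tk"
    have p: "of_int i * \<rho> + \<rho> - h * \<alpha> + sqrt h * \<sigma> tk = y1 + \<rho>"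
         "of_int i * \<rho> + \<rho> - h * \<alpha> - sqrt h * \<sigma> tk = y2 + \<rho>"
         "of_int i * \<rho> - \<rho> - h * \<alpha> + sqrt h * \<sigma> tk = y1 - \<rho>"
         "of_int i * \<rho> - \<rho> - h * \<alpha> - sqrt h * \<sigma> tk = y2 - \<rho>"
         "of_int i * \<rho> - h * \<alpha> + sqrt h * \<sigma> tk = y1"
         "of_int i * \<rho> - h * \<alpha> - sqrt h * \<sigma> tk = y2"
      unfolding y1_def y2_def by (simp_all add: algebra_simps)
    have e1: "Qf \<rho> h T \<sigma> F G \<mu> j (i+1) \<alpha> = (interp \<rho> f (y1+\<rho>) + interp \<rho> f (y2+\<rho>)) / 2 + h * \<alpha>\<^sup>2 / 2 + h * Fq (of_int i * \<rho> + \<rho>)"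
      by (simp only: Qf_def xi p f_def[symmetric] tk_def[symmetric] Fq_def)
    have e2: "Qf \<rho> h T \<sigma> F G \<mu> j (i-1) \<alpha> = (interp \<rho> f (y1-\<rho>) + interp \<rho> f (y2-\<rho>)) / 2 + h * \<alpha>\<^sup>2 / 2 + h * Fq (of_int i * \<rho> - \<rho>)"
      by (simp only: Qf_def xi p f_def[symmetric] tk_def[symmetric] Fq_def)
    have e3: "Qf \<rho> h T \<sigma> F G \<mu> j i \<alpha> = (interp \<rho> f y1 + interp \<rho> f y2) / 2 + h * \<alpha>\<^sup>2 / 2 + h * Fq (of_int i * \<rho>)"
      by (simp only: Qf_def p f_def[symmetric] tk_def[symmetric] Fq_def)
    have s1: "interp \<rho> f (y1+\<rho>) + interp \<rho> f (y1-\<rho>) - 2 * interp \<rho> f y1 \<le> S" by (rule interp_SC[OF rp IH])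
    have s2: "interp \<rho> f (y2+\<rho>) + interp \<rho> f (y2-\<rho>) - 2 * interp \<rho> f y2 \<le> S" by (rule interp_SC[OF rp IH])
    have "Fq (of_int i * \<rho> + \<rho>) + Fq (of_int i * \<rho> - \<rho>) - 2 * Fq (of_int i * \<rho>) \<le> K * \<rho>^2"
      unfolding Fq_def tk_def by (rule C2_SC[OF FC2]) (use rp in simp)
    hence s3: "h * (Fq (of_int i * \<rho> + \<rho>) + Fq (of_int i * \<rho> - \<rho>) - 2 * Fq (of_int i * \<rho>)) \<le> h * (K * \<rho>^2)"
      using hp by (intro mult_left_mono) auto
    show ?thesis unfolding e1 e2 e3 using s1 s2 s3 by (simp add: algebra_simps) argo
  qed
  show ?case
  proof (rule field_le_epsilon)
    fix e :: real assume e: "e > 0"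
    define H where "H = hjb \<rho> h T \<sigma> F G \<mu> (Suc j)"
    have "(INF \<alpha>. Qf \<rho> h T \<sigma> F G \<mu> j i \<alpha>) < H i + e/2" unfolding H_def hjb_Suc' using e by simp
    then obtain \<alpha> where a: "Qf \<rho> h T \<sigma> F G \<mu> j i \<alpha> < H i + e/2"
      using cINF_less_iff[OF _ Q_bdd] by blast
    have u1: "H (i+1) \<le> Qf \<rho> h T \<sigma> F G \<mu> j (i+1) \<alpha>" unfolding H_def hjb_Suc' by (rule cINF_lower[OF Q_bdd]) simp
    have u2: "H (i-1) \<le> Qf \<rho> h T \<sigma> F G \<mu> j (i-1) \<alpha>" unfolding H_def hjb_Suc' by (rule cINF_lower[OF Q_bdd]) simp
    have "S + h * K * \<rho>\<^sup>2 = K * \<rho>\<^sup>2 * (1 + real (Suc j) * h)" unfolding S_def by (simp add: algebra_simps)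
    thus "H (i+1) + H (i-1) - 2 * H i \<le> K * \<rho>\<^sup>2 * (1 + real (Suc j) * h) + e"
      using key[of \<alpha>] a u1 u2 by argo
  qed
qed

end

lemma mollifier_facts:
  assumes "mollifier \<phi>"
  shows "\<exists>R Pm. R \<ge> 0 \<and> continuous_on UNIV \<phi> \<and> (\<forall>x. (\<phi> has_real_derivative deriv \<phi> x) (at x))
     \<and> continuous_on UNIV (deriv \<phi>) \<and> (\<forall>x. \<bar>x\<bar> > R \<longrightarrow> \<phi> x = 0) \<and> (\<forall>x. \<phi> x \<ge> 0)
     \<and> integral\<^sup>L lborel \<phi> = 1 \<and> (\<forall>x. \<bar>deriv \<phi> x\<bar> \<le> Pm)"
proof -
  from assms obtain R0 where R0: "\<And>x. \<bar>x\<bar> > R0 \<Longrightarrow> \<phi> x = 0" unfolding mollifier_def by blast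
  define R where "R = max R0 0"
  have R: "\<And>x. \<bar>x\<bar> > R \<Longrightarrow> \<phi> x = 0" using R0 unfolding R_def by simp
  have d0: "\<phi> differentiable at x" for x using assms unfolding mollifier_def
    by (metis funpow_0)
  have d1: "deriv \<phi> differentiable at x" for x using assms unfolding mollifier_def
    by (metis funpow_0 funpow_Suc_right o_apply)
  have pd: "(\<phi> has_real_derivative deriv \<phi> x) (at x)" for x using d0 DERIV_deriv_iff_real_differentiable by blast
  have pc: "continuous_on UNIV \<phi>" using d0 by (simp add: continuous_at_imp_continuous_on differentiable_imp_continuous_within)
  have p'c: "continuous_on UNIV (deriv \<phi>)" using d1 by (simp add: continuous_at_imp_continuous_on differentiable_imp_continuous_within)
  have dz: "deriv \<phi> x = 0" if "\<bar>x\<bar> > R" for x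
  proof -
    have o: "open {y::real. R < \<bar>y\<bar>}" by (intro open_Collect_less continuous_intros)
    have "(\<phi> has_real_derivative 0) (at x)"
      by (rule has_field_derivative_transform_within_open[OF DERIV_const o]) (use that R in auto)
    thus ?thesis using pd DERIV_unique by blast
  qed
  have "bounded (deriv \<phi> ` {-R..R})"
    by (rule compact_imp_bounded[OF compact_continuous_image]) (auto intro: continuous_on_subset[OF p'c])
  then obtain Pm where Pm: "\<And>x. x \<in> {-R..R} \<Longrightarrow> \<bar>deriv \<phi> x\<bar> \<le> Pm" unfolding bounded_real by blast
  have "\<bar>deriv \<phi> x\<bar> \<le> max Pm 0" for x
  proof (cases "\<bar>x\<bar> > R")
    case True thus ?thesis using dz by simp
  next
    case False
    hence "x \<in> {-R..R}" by auto
    thus ?thesis using Pm[of x] by linarith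
  qed
  moreover have "R \<ge> 0" unfolding R_def by simp
  ultimately show ?thesis using pd pc p'c R assms unfolding mollifier_def by blast
qed

lemma veps_cv: assumes "h > 0"
  shows "veps \<phi> \<epsilon> \<rho> h T \<sigma> F G \<mu> x (real k * h) = cv \<phi> \<epsilon> (interp \<rho> (hjb \<rho> h T \<sigma> F G \<mu> (gridN T h - k))) x"
  using assms by (simp add: veps_def vdisc_def vgrid_def cv_def)


context
  fixes \<rho> h T :: real and \<sigma> :: "real \<Rightarrow> real" and F G :: "real \<Rightarrow> real measure \<Rightarrow> real"
    and \<mu> :: "real \<Rightarrow> real measure" and K :: real
    and \<phi> \<phi>' :: "real \<Rightarrow> real" and \<epsilon> R Pm :: real
  assumes rp: "\<rho> > 0" and hp: "h > 0" and T0: "T \<ge> 0"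
    and Kb: "\<And>m. m \<in> P1 \<Longrightarrow> (\<forall>x. \<bar>F x m\<bar> \<le> K \<and> \<bar>G x m\<bar> \<le> K) \<and> C2_bdd (\<lambda>x. F x m) K \<and> C2_bdd (\<lambda>x. G x m) K"
    and \<mu>P: "\<And>t. t \<in> {0..T} \<Longrightarrow> \<mu> t \<in> P1"
    and pc: "continuous_on UNIV \<phi>"
    and pd: "\<And>x. (\<phi> has_real_derivative \<phi>' x) (at x)"
    and p'c: "continuous_on UNIV \<phi>'"
    and ps: "\<And>x. \<bar>x\<bar> > R \<Longrightarrow> \<phi> x = 0"
    and pn: "\<And>x. \<phi> x \<ge> 0"
    and pint: "integral\<^sup>L lborel \<phi> = 1"
    and ep: "\<epsilon> > 0"
    and Pm: "\<And>x. \<bar>\<phi>' x\<bar> \<le> Pm"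
    and R0: "R \<ge> 0"
begin

lemma K0: "K \<ge> 0"
proof -
  have "\<mu> T \<in> P1" using \<mu>P T0 by auto
  from Kb[OF this] have "\<bar>G 0 (\<mu> T)\<bar> \<le> K" by blast
  thus ?thesis by linarith
qed

definition C0 where "C0 = K * (1 + T)"

lemma grid_props:
  assumes "real j * h \<le> T"
  shows "\<bar>hjb \<rho> h T \<sigma> F G \<mu> j i\<bar> \<le> C0"
    "hjb \<rho> h T \<sigma> F G \<mu> j (i+1) + hjb \<rho> h T \<sigma> F G \<mu> j (i-1) - 2 * hjb \<rho> h T \<sigma> F G \<mu> j i \<le> C0 * \<rho>\<^sup>2"
proof -
  have a: "K * (1 + real j * h) \<le> C0" unfolding C0_def using K0 assms by (intro mult_left_mono) auto
  show "\<bar>hjb \<rho> h T \<sigma> F G \<mu> j i\<bar> \<le> C0" using HB[OF rp hp T0 Kb \<mu>P] a by (meson order_trans)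
  have "(K * (1 + real j * h)) * \<rho>\<^sup>2 \<le> C0 * \<rho>\<^sup>2" using a by (intro mult_right_mono) auto
  hence "K * \<rho>\<^sup>2 * (1 + real j * h) \<le> C0 * \<rho>\<^sup>2" by (simp add: algebra_simps)
  thus "hjb \<rho> h T \<sigma> F G \<mu> j (i+1) + hjb \<rho> h T \<sigma> F G \<mu> j (i-1) - 2 * hjb \<rho> h T \<sigma> F G \<mu> j i \<le> C0 * \<rho>\<^sup>2"
    using HS[OF rp hp T0 Kb \<mu>P] by (meson order_trans)
qed

definition Md where "Md = (2 + 2 * \<epsilon> * R) * ((1/\<epsilon>) * (Pm * (1/\<epsilon>)) * C0)"

lemma dv_bound:
  assumes "real j * h \<le> T"
  shows "\<exists>D. (cv \<phi> \<epsilon> (interp \<rho> (hjb \<rho> h T \<sigma> F G \<mu> j)) has_real_derivative D) (at x) \<and> \<bar>D\<bar> \<le> Md"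
  unfolding Md_def
proof (rule cv_deriv[OF pc pd p'c ps pn pint ep Pm _ _ R0])
  show "continuous_on UNIV (interp \<rho> (hjb \<rho> h T \<sigma> F G \<mu> j))"
    using interp_cont[OF rp] by (simp add: continuous_at_imp_continuous_on)
  show "\<bar>interp \<rho> (hjb \<rho> h T \<sigma> F G \<mu> j) y\<bar> \<le> C0" for y
    by (rule interp_bound[OF rp grid_props(1)[OF assms]])
qed

lemma dv_diff:
  assumes "real j * h \<le> T"
  defines "w \<equiv> interp \<rho> (hjb \<rho> h T \<sigma> F G \<mu> j)"
  shows "deriv (cv \<phi> \<epsilon> w) (x + \<rho>) - deriv (cv \<phi> \<epsilon> w) x \<le> C0 * \<rho>"
proof -
  define f where "f = hjb \<rho> h T \<sigma> F G \<mu> j"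
  obtain D1 where D1: "(cv \<phi> \<epsilon> w has_real_derivative D1) (at x)" using dv_bound[OF assms(1)] unfolding w_def by blast
  obtain D2 where D2: "(cv \<phi> \<epsilon> w has_real_derivative D2) (at (x + \<rho>))" using dv_bound[OF assms(1)] unfolding w_def by blast
  have D2': "((\<lambda>x. cv \<phi> \<epsilon> w (x + \<rho>)) has_real_derivative D2) (at x)" using D2 DERIV_shift by blast
  have H: "((\<lambda>x. cv \<phi> \<epsilon> w (x + \<rho>) - cv \<phi> \<epsilon> w x) has_real_derivative D2 - D1) (at x)"
    by (rule DERIV_diff[OF D2' D1])
  have wc: "continuous_on UNIV w" unfolding w_def using interp_cont[OF rp] by (simp add: continuous_at_imp_continuous_on)
  have wd: "w (z + \<rho>) - w z = interp \<rho> (\<lambda>i. f (i+1) - f i) z" for z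
    unfolding w_def f_def interp_shift_plus[OF rp] interp_diff[OF rp] ..
  have sl: "(w (y'+\<rho>) - w y') - (w (y+\<rho>) - w y) \<le> (C0 * \<rho>) * (y' - y)" if "y \<le> y'" for y y'
    unfolding wd
  proof (rule interp_slope[OF rp _ that])
    fix i
    have "f (i+1+1) + f (i+1-1) - 2 * f (i+1) \<le> C0 * \<rho>\<^sup>2" unfolding f_def by (rule grid_props(2)[OF assms(1)])
    thus "f (i + 1 + 1) - f (i + 1) - (f (i + 1) - f i) \<le> C0 * \<rho> * \<rho>" by (simp add: power2_eq_square)
  qed
  have "D2 - D1 \<le> C0 * \<rho>"
  proof (rule deriv_le_from_slope[OF H])
    fix y assume "y > x"
    show "cv \<phi> \<epsilon> w (y + \<rho>) - cv \<phi> \<epsilon> w y - (cv \<phi> \<epsilon> w (x + \<rho>) - cv \<phi> \<epsilon> w x) \<le> C0 * \<rho> * (y - x)"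
      by (rule cv_mono[OF pc pd p'c ps pn pint ep Pm wc sl]) (use \<open>y > x\<close> in auto)
  qed
  thus ?thesis using DERIV_imp_deriv[OF D1] DERIV_imp_deriv[OF D2] by simp
qed

end

lemma three_tent:
  fixes u v w d :: real
  assumes "d \<le> 1" "v \<ge> u + d" "w \<ge> v + d"
  shows "max 0 (1 - \<bar>u\<bar>) + max 0 (1 - \<bar>v\<bar>) + max 0 (1 - \<bar>w\<bar>) \<le> 3 - 2 * d"
  using assms by (auto simp: max_def abs_if split: if_splits)

lemma hat_scaled: assumes "\<rho> > 0" shows "hat \<rho> i y = max 0 (1 - \<bar>(y - of_int i * \<rho>) / \<rho>\<bar>)"
  using assms by (simp add: hat_def abs_divide)

lemma psi_mono:
  fixes \<Psi> :: "int \<Rightarrow> real"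
  assumes "\<And>j. \<Psi> (j+1) - \<Psi> j \<ge> \<delta>" "j1 \<le> j"
  shows "\<Psi> j \<ge> \<Psi> j1 + of_int (j - j1) * \<delta>"
  using assms(2)
proof (induction j rule: int_ge_induct)
  case base then show ?case by simp
next
  case (step j)
  have "of_int (j + 1 - j1) * \<delta> = of_int (j - j1) * \<delta> + \<delta>" by (simp add: algebra_simps)
  then show ?case using step assms(1)[of j] by linarith
qed

lemma tent_fine:
  fixes \<Psi> :: "int \<Rightarrow> real"
  assumes rp: "\<rho> > 0" and sp: "\<And>j. \<Psi> (j+1) - \<Psi> j \<ge> \<delta>" and d1: "2 * \<rho> / 3 \<le> \<delta>" and d2: "\<delta> \<le> \<rho>"
    and fin: "finite J"
  shows "(\<Sum>j\<in>J. hat \<rho> i (\<Psi> j)) \<le> 3 - 2 * (\<delta> / \<rho>)"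
proof -
  define P where "P = {j\<in>J. hat \<rho> i (\<Psi> j) \<noteq> 0}"
  have fP: "finite P" using fin unfolding P_def by simp
  have eq: "(\<Sum>j\<in>J. hat \<rho> i (\<Psi> j)) = (\<Sum>j\<in>P. hat \<rho> i (\<Psi> j))"
    unfolding P_def by (rule sum.mono_neutral_right[OF fin]) auto
  have dr: "\<delta> / \<rho> \<le> 1" using d2 rp by simp
  show ?thesis
  proof (cases "P = {}")
    case True thus ?thesis using eq dr by simp
  next
    case False
    define j1 where "j1 = Min P"
    have j1P: "j1 \<in> P" unfolding j1_def using fP False by simp
    have sub: "P \<subseteq> {j1, j1+1, j1+2}"
    proof
      fix j assume jP: "j \<in> P"
      have ge: "j1 \<le> j" unfolding j1_def using fP jP by simp
      have a1: "\<bar>\<Psi> j1 - of_int i * \<rho>\<bar> < \<rho>" using hat_nz[OF rp] j1P unfolding P_def by blast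
      have a2: "\<bar>\<Psi> j - of_int i * \<rho>\<bar> < \<rho>" using hat_nz[OF rp] jP unfolding P_def by blast
      have "j \<le> j1 + 2"
      proof (rule ccontr)
        assume "\<not> j \<le> j1 + 2"
        hence "of_int (j - j1) \<ge> (3::real)" by simp
        hence "of_int (j - j1) * \<delta> \<ge> 3 * \<delta>" using d1 rp by (intro mult_right_mono) auto
        moreover have "\<Psi> j \<ge> \<Psi> j1 + of_int (j - j1) * \<delta>" using psi_mono[of \<delta> \<Psi> j1 j] sp ge by blast
        ultimately have "\<Psi> j \<ge> \<Psi> j1 + 3 * \<delta>" by linarith
        thus False using a1 a2 d1 by (simp add: abs_less_iff)
      qed
      thus "j \<in> {j1, j1+1, j1+2}" using ge by auto
    qed
    have "(\<Sum>j\<in>P. hat \<rho> i (\<Psi> j)) \<le> (\<Sum>j\<in>{j1, j1+1, j1+2}. hat \<rho> i (\<Psi> j))"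
      by (rule sum_mono2[OF _ sub]) (auto simp: hat_nonneg)
    also have "\<dots> = hat \<rho> i (\<Psi> j1) + hat \<rho> i (\<Psi> (j1+1)) + hat \<rho> i (\<Psi> (j1+2))" by simp
    also have "\<dots> \<le> 3 - 2 * (\<delta> / \<rho>)"
      unfolding hat_scaled[OF rp]
    proof (rule three_tent[OF dr])
      have "\<Psi> (j1+1) \<ge> \<Psi> j1 + \<delta>" using sp[of j1] by simp
      hence "(\<Psi> (j1+1) - of_int i * \<rho>) \<ge> (\<Psi> j1 - of_int i * \<rho>) + \<delta>" by simp
      thus "(\<Psi> (j1+1) - of_int i * \<rho>) / \<rho> \<ge> (\<Psi> j1 - of_int i * \<rho>) / \<rho> + \<delta> / \<rho>"
        using rp by (simp add: add_divide_distrib[symmetric] divide_right_mono)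
      have "\<Psi> (j1+2) \<ge> \<Psi> (j1+1) + \<delta>" using sp[of "j1+1"] by (simp add: add.assoc)
      hence "(\<Psi> (j1+2) - of_int i * \<rho>) \<ge> (\<Psi> (j1+1) - of_int i * \<rho>) + \<delta>" by simp
      thus "(\<Psi> (j1+2) - of_int i * \<rho>) / \<rho> \<ge> (\<Psi> (j1+1) - of_int i * \<rho>) / \<rho> + \<delta> / \<rho>"
        using rp by (simp add: add_divide_distrib[symmetric] divide_right_mono)
    qed
    finally show ?thesis using eq by simp
  qed
qed

definition nb :: "real \<Rightarrow> real \<Rightarrow> int" where "nb D \<rho> = \<lceil>D / \<rho>\<rceil> + 1"

lemma supp_box:
  assumes rp: "\<rho> > 0" and "\<bar>\<Psi> j - of_int j * \<rho>\<bar> \<le> D" "hat \<rho> i (\<Psi> j) \<noteq> 0"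
  shows "j \<in> {i - nb D \<rho> .. i + nb D \<rho>}"
proof -
  have "\<bar>\<Psi> j - of_int i * \<rho>\<bar> < \<rho>" using hat_nz[OF rp assms(3)] .
  hence "\<bar>of_int j * \<rho> - of_int i * \<rho>\<bar> < \<rho> + D" using assms(2) by linarith
  moreover have "of_int j * \<rho> - of_int i * \<rho> = of_int (j - i) * \<rho>" by (simp add: algebra_simps)
  ultimately have "\<bar>of_int (j - i)\<bar> * \<rho> < \<rho> + D" using rp by (simp add: abs_mult)
  hence "\<bar>of_int (j - i)\<bar> < (\<rho> + D) / \<rho>" using rp by (simp add: pos_less_divide_eq)
  moreover have "(\<rho> + D) / \<rho> = 1 + D / \<rho>" using rp by (simp add: add_divide_distrib)
  ultimately have "\<bar>of_int (j - i)\<bar> < 1 + D / \<rho>" by simp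
  moreover have "D / \<rho> \<le> of_int \<lceil>D / \<rho>\<rceil>" by simp
  ultimately have "\<bar>of_int (j - i)\<bar> < (of_int (nb D \<rho>) :: real)" unfolding nb_def by linarith
  hence "\<bar>j - i\<bar> < nb D \<rho>" by linarith
  thus ?thesis by auto
qed

lemma tent_crude:
  assumes rp: "\<rho> > 0" and "\<And>j. \<bar>\<Psi> j - of_int j * \<rho>\<bar> \<le> D" and fin: "finite J"
  shows "(\<Sum>j\<in>J. hat \<rho> i (\<Psi> j)) \<le> real_of_int (2 * nb D \<rho> + 1)"
proof -
  define Bx where "Bx = {i - nb D \<rho> .. i + nb D \<rho>}"
  have "(\<Sum>j\<in>J. hat \<rho> i (\<Psi> j)) = (\<Sum>j\<in>J \<inter> Bx. hat \<rho> i (\<Psi> j))"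
  proof (rule sum.mono_neutral_right[OF fin])
    have sb: "hat \<rho> i (\<Psi> j) \<noteq> 0 \<Longrightarrow> j \<in> Bx" for j using supp_box[of \<rho> \<Psi> j D i] rp assms(2)[of j] unfolding Bx_def by blast
    show "\<forall>j\<in>J - J \<inter> Bx. hat \<rho> i (\<Psi> j) = 0" using sb by blast
  qed auto
  also have "\<dots> \<le> (\<Sum>j\<in>J \<inter> Bx. 1)" by (rule sum_mono) (simp add: hat_le1[OF rp])
  also have "\<dots> \<le> card Bx"
  proof -
    have "card (J \<inter> Bx) \<le> card Bx" by (rule card_mono) (auto simp: Bx_def)
    thus ?thesis by simp
  qed
  also have "card Bx = nat (2 * nb D \<rho> + 1)" unfolding Bx_def by simp
  finally have f: "(\<Sum>j\<in>J. hat \<rho> i (\<Psi> j)) \<le> real (nat (2 * nb D \<rho> + 1))" .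
  have "D \<ge> 0" using assms(2)[of 0] by linarith
  hence "D / \<rho> \<ge> 0" using rp by simp
  hence "nb D \<rho> \<ge> 1" unfolding nb_def by simp
  thus ?thesis using f by simp
qed


lemma fp_step_bound:
  fixes \<Psi>p \<Psi>m m :: "int \<Rightarrow> real"
  assumes rp: "\<rho> > 0" and mb: "\<And>j. 0 \<le> m j \<and> m j \<le> M"
    and Dp: "\<And>j. \<bar>\<Psi>p j - of_int j * \<rho>\<bar> \<le> D" and Dm: "\<And>j. \<bar>\<Psi>m j - of_int j * \<rho>\<bar> \<le> D"
    and Ap: "\<And>J. finite J \<Longrightarrow> (\<Sum>j\<in>J. hat \<rho> i (\<Psi>p j)) \<le> A"
    and Am: "\<And>J. finite J \<Longrightarrow> (\<Sum>j\<in>J. hat \<rho> i (\<Psi>m j)) \<le> A"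
  shows "0 \<le> (1/2) * infsum (\<lambda>j. (hat \<rho> i (\<Psi>p j) + hat \<rho> i (\<Psi>m j)) * m j) UNIV"
    "(1/2) * infsum (\<lambda>j. (hat \<rho> i (\<Psi>p j) + hat \<rho> i (\<Psi>m j)) * m j) UNIV \<le> A * M"
proof -
  define Bx where "Bx = {i - nb D \<rho> .. i + nb D \<rho>}"
  have fB: "finite Bx" unfolding Bx_def by simp
  have sbp: "hat \<rho> i (\<Psi>p j) \<noteq> 0 \<Longrightarrow> j \<in> Bx" for j using supp_box[of \<rho> \<Psi>p j D i] rp Dp[of j] unfolding Bx_def by blast
  have sbm: "hat \<rho> i (\<Psi>m j) \<noteq> 0 \<Longrightarrow> j \<in> Bx" for j using supp_box[of \<rho> \<Psi>m j D i] rp Dm[of j] unfolding Bx_def by blast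
  have eq: "infsum (\<lambda>j. (hat \<rho> i (\<Psi>p j) + hat \<rho> i (\<Psi>m j)) * m j) UNIV
      = (\<Sum>j\<in>Bx. (hat \<rho> i (\<Psi>p j) + hat \<rho> i (\<Psi>m j)) * m j)"
  proof -
    have "infsum (\<lambda>j. (hat \<rho> i (\<Psi>p j) + hat \<rho> i (\<Psi>m j)) * m j) UNIV
        = infsum (\<lambda>j. (hat \<rho> i (\<Psi>p j) + hat \<rho> i (\<Psi>m j)) * m j) Bx"
    proof (rule infsum_cong_neutral)
      fix x assume "x \<in> UNIV - Bx"
      hence "hat \<rho> i (\<Psi>p x) = 0" "hat \<rho> i (\<Psi>m x) = 0" using sbp[of x] sbm[of x] by auto
      thus "(hat \<rho> i (\<Psi>p x) + hat \<rho> i (\<Psi>m x)) * m x = 0" by simp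
    qed auto
    also have "\<dots> = (\<Sum>j\<in>Bx. (hat \<rho> i (\<Psi>p j) + hat \<rho> i (\<Psi>m j)) * m j)" by (rule infsum_finite[OF fB])
    finally show ?thesis .
  qed
  have M0: "M \<ge> 0" using mb[of 0] by linarith
  have "(\<Sum>j\<in>Bx. (hat \<rho> i (\<Psi>p j) + hat \<rho> i (\<Psi>m j)) * m j) \<ge> 0"
    using mb by (intro sum_nonneg) (simp add: hat_nonneg)
  thus "0 \<le> (1/2) * infsum (\<lambda>j. (hat \<rho> i (\<Psi>p j) + hat \<rho> i (\<Psi>m j)) * m j) UNIV" unfolding eq by simp
  have "(\<Sum>j\<in>Bx. (hat \<rho> i (\<Psi>p j) + hat \<rho> i (\<Psi>m j)) * m j) \<le> (\<Sum>j\<in>Bx. (hat \<rho> i (\<Psi>p j) + hat \<rho> i (\<Psi>m j)) * M)"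
    using mb by (intro sum_mono mult_left_mono) (auto simp: hat_nonneg add_nonneg_nonneg)
  also have "\<dots> = ((\<Sum>j\<in>Bx. hat \<rho> i (\<Psi>p j)) + (\<Sum>j\<in>Bx. hat \<rho> i (\<Psi>m j))) * M"
    by (simp add: sum.distrib sum_distrib_right[symmetric])
  also have "\<dots> \<le> (A + A) * M" using Ap[OF fB] Am[OF fB] M0 by (intro mult_right_mono) auto
  finally show "(1/2) * infsum (\<lambda>j. (hat \<rho> i (\<Psi>p j) + hat \<rho> i (\<Psi>m j)) * m j) UNIV \<le> A * M"
    unfolding eq by simp
qed

definition Afac :: "real \<Rightarrow> real \<Rightarrow> real \<Rightarrow> real \<Rightarrow> real \<Rightarrow> real \<Rightarrow> real \<Rightarrow> real \<Rightarrow> real" where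
  "Afac \<rho> h \<epsilon> K T R Pm S\<sigma> =
    (if K * (1 + T) * h \<le> 1/3 then 1 + 2 * (K * (1 + T)) * h
     else real_of_int (2 * nb (h * ((2 + 2 * \<epsilon> * R) * ((1/\<epsilon>) * (Pm * (1/\<epsilon>)) * (K * (1 + T)))) + sqrt h * S\<sigma>) \<rho> + 1))"

lemma m0_box:
  assumes m0d: "m0 = density lborel (\<lambda>x. ennreal (f0 x))" and f0m: "f0 \<in> borel_measurable borel"
    and f0B: "AE x in lborel. f0 x \<le> B0" and B0: "B0 \<ge> 0" and ab: "a \<le> b"
  shows "measure m0 {a..b} \<le> B0 * (b - a)"
proof -
  have "emeasure m0 {a..b} = (\<integral>\<^sup>+ x. ennreal (f0 x) * indicator {a..b} x \<partial>lborel)"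
    unfolding m0d using f0m by (subst emeasure_density) auto
  also have "\<dots> \<le> (\<integral>\<^sup>+ x. ennreal B0 * indicator {a..b} x \<partial>lborel)"
    by (rule nn_integral_mono_AE) (use f0B in \<open>auto elim!: eventually_mono intro: mult_right_mono ennreal_leI simp: indicator_def\<close>)
  also have "\<dots> = ennreal B0 * ennreal (b - a)" using ab by (simp add: nn_integral_cmult_indicator)
  also have "\<dots> = ennreal (B0 * (b - a))" using B0 ab by (simp add: ennreal_mult)
  finally have e: "emeasure m0 {a..b} \<le> ennreal (B0 * (b - a))" .
  have "measure m0 {a..b} = enn2real (emeasure m0 {a..b})" by (simp add: measure_def)
  also have "\<dots> \<le> enn2real (ennreal (B0 * (b - a)))" by (rule enn2real_mono[OF e]) simp
  also have "\<dots> = B0 * (b - a)" using B0 ab by simp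
  finally show ?thesis .
qed


context
  fixes \<rho> h T :: real and \<sigma> :: "real \<Rightarrow> real" and F G :: "real \<Rightarrow> real measure \<Rightarrow> real"
    and \<mu> :: "real \<Rightarrow> real measure" and K :: real
    and \<phi> :: "real \<Rightarrow> real" and \<epsilon> R Pm :: real
    and m0 :: "real measure" and f0 :: "real \<Rightarrow> real" and B0 S\<sigma> :: real
  assumes rp: "\<rho> > 0" and hp: "h > 0" and T0: "T \<ge> 0"
    and TN: "real (gridN T h) * h = T"
    and Kb: "\<And>m. m \<in> P1 \<Longrightarrow> (\<forall>x. \<bar>F x m\<bar> \<le> K \<and> \<bar>G x m\<bar> \<le> K) \<and> C2_bdd (\<lambda>x. F x m) K \<and> C2_bdd (\<lambda>x. G x m) K"
    and \<mu>P: "\<And>t. t \<in> {0..T} \<Longrightarrow> \<mu> t \<in> P1"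
    and pc: "continuous_on UNIV \<phi>"
    and pd: "\<And>x. (\<phi> has_real_derivative deriv \<phi> x) (at x)"
    and p'c: "continuous_on UNIV (deriv \<phi>)"
    and ps: "\<And>x. \<bar>x\<bar> > R \<Longrightarrow> \<phi> x = 0"
    and pn: "\<And>x. \<phi> x \<ge> 0"
    and pint: "integral\<^sup>L lborel \<phi> = 1"
    and ep: "\<epsilon> > 0"
    and Pm: "\<And>x. \<bar>deriv \<phi> x\<bar> \<le> Pm"
    and R0: "R \<ge> 0"
    and S\<sigma>: "\<And>t. t \<in> {0..T} \<Longrightarrow> \<bar>\<sigma> t\<bar> \<le> S\<sigma>"
    and m0d: "m0 = density lborel (\<lambda>x. ennreal (f0 x))" and f0m: "f0 \<in> borel_measurable borel"
    and f0B: "AE x in lborel. f0 x \<le> B0" and B0: "B0 \<ge> 0"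
begin

lemmas ctx = rp hp T0 Kb \<mu>P pc pd p'c ps pn pint ep Pm R0

lemma dvb0: "real j * h \<le> T \<Longrightarrow> \<exists>D. (cv \<phi> \<epsilon> (interp \<rho> (hjb \<rho> h T \<sigma> F G \<mu> j)) has_real_derivative D) (at x) \<and> \<bar>D\<bar> \<le> Md T K \<epsilon> R Pm"
  using rp hp T0 Kb \<mu>P pc pd p'c ps pn pint ep Pm R0 by (rule dv_bound)
lemma dvd0: "real j * h \<le> T \<Longrightarrow> deriv (cv \<phi> \<epsilon> (interp \<rho> (hjb \<rho> h T \<sigma> F G \<mu> j))) (x + \<rho>) - deriv (cv \<phi> \<epsilon> (interp \<rho> (hjb \<rho> h T \<sigma> F G \<mu> j))) x \<le> C0 T K * \<rho>"
  using rp hp T0 Kb \<mu>P pc pd p'c ps pn pint ep Pm R0 by (rule dv_diff)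
lemma C0d: "C0 T K = K * (1 + T)"
  using rp hp T0 Kb \<mu>P pc pd p'c ps pn pint ep Pm R0 by (rule C0_def)
lemma Mdd: "Md T K \<epsilon> R Pm = (2 + 2 * \<epsilon> * R) * (1 / \<epsilon> * (Pm * (1 / \<epsilon>)) * C0 T K)"
  using rp hp T0 Kb \<mu>P pc pd p'c ps pn pint ep Pm R0 by (rule Md_def)
lemma K0': "K \<ge> 0"
  using rp hp T0 Kb \<mu>P pc pd p'c ps pn pint ep Pm R0 by (rule K0)

definition "C0' = K * (1 + T)"
definition "Md' = (2 + 2 * \<epsilon> * R) * ((1/\<epsilon>) * (Pm * (1/\<epsilon>)) * C0')"
definition "D0 = h * Md' + sqrt h * S\<sigma>"
definition "Af = Afac \<rho> h \<epsilon> K T R Pm S\<sigma>"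

lemma Af_eq: "Af = (if C0' * h \<le> 1/3 then 1 + 2 * C0' * h else real_of_int (2 * nb D0 \<rho> + 1))"
  unfolding Af_def Afac_def D0_def Md'_def C0'_def ..

lemma C0'_eq: "C0 T K = C0'" using C0d unfolding C0'_def .
lemma Md'_eq: "Md T K \<epsilon> R Pm = Md'" using Mdd unfolding Md'_def C0'_eq .
lemma C0'_nn: "C0' \<ge> 0" unfolding C0'_def using K0' T0 by simp

lemma S\<sigma>0: "S\<sigma> \<ge> 0" using S\<sigma>[of 0] T0 by (meson abs_ge_zero atLeastAtMost_iff order.refl order_trans)

lemma Md'_nn: "Md' \<ge> 0"
proof -
  obtain D where "\<bar>D\<bar> \<le> Md T K \<epsilon> R Pm"
    using dvb0[where j=0 and x=0] T0 by auto
  thus ?thesis unfolding Md'_eq by linarith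
qed

lemma D0_nn: "D0 \<ge> 0" unfolding D0_def using Md'_nn S\<sigma>0 hp by simp

lemma Af_ge1: "Af \<ge> 1"
proof -
  have "D0 / \<rho> \<ge> 0" using D0_nn rp by simp
  hence "nb D0 \<rho> \<ge> 1" unfolding nb_def by simp
  thus ?thesis unfolding Af_eq using C0'_nn hp by simp
qed

lemma A_bound:
  fixes \<Psi> :: "int \<Rightarrow> real"
  assumes "\<And>j. \<bar>\<Psi> j - of_int j * \<rho>\<bar> \<le> D0" "\<And>j. \<Psi> (j+1) - \<Psi> j \<ge> \<rho> - h * C0' * \<rho>" "finite J"
  shows "(\<Sum>j\<in>J. hat \<rho> i (\<Psi> j)) \<le> Af"
proof (cases "C0' * h \<le> 1/3")
  case True
  have "(\<Sum>j\<in>J. hat \<rho> i (\<Psi> j)) \<le> 3 - 2 * ((\<rho> - h * C0' * \<rho>) / \<rho>)"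
  proof (rule tent_fine[where \<rho>=\<rho> and \<Psi>=\<Psi> and \<delta>="\<rho> - h * C0' * \<rho>" and J=J and i=i])
    show "\<rho> > 0" by (rule rp)
    show "\<rho> - h * C0' * \<rho> \<le> \<Psi> (j + 1) - \<Psi> j" for j by (rule assms(2))
    show "finite J" by (rule assms(3))
    have "h * C0' * \<rho> \<le> (1/3) * \<rho>" using True rp by (intro mult_right_mono) (auto simp: mult.commute)
    thus "2 * \<rho> / 3 \<le> \<rho> - h * C0' * \<rho>" by simp
    show "\<rho> - h * C0' * \<rho> \<le> \<rho>" using C0'_nn hp rp by simp
  qed
  also have "3 - 2 * ((\<rho> - h * C0' * \<rho>) / \<rho>) = 1 + 2 * C0' * h" using rp by (simp add: field_simps)
  finally show ?thesis unfolding Af_eq using True by simp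
next
  case False
  thus ?thesis unfolding Af_eq using tent_crude[OF rp assms(1) assms(3)] by simp
qed

lemma fp_bound:
  "k \<le> gridN T h + 1 \<Longrightarrow> 0 \<le> fp \<phi> \<epsilon> \<rho> h T \<sigma> F G m0 \<mu> k i \<and> fp \<phi> \<epsilon> \<rho> h T \<sigma> F G m0 \<mu> k i \<le> Af ^ k * (\<rho> * B0)"
proof (induction k arbitrary: i)
  case 0
  have "measure m0 {of_int i * \<rho> - \<rho> / 2 .. of_int i * \<rho> + \<rho> / 2} \<le> B0 * ((of_int i * \<rho> + \<rho> / 2) - (of_int i * \<rho> - \<rho> / 2))"
    by (rule m0_box[OF m0d f0m f0B B0]) (use rp in simp)
  thus ?case using rp by (simp add: mult.commute)
next
  case (Suc k)
  have kN: "k \<le> gridN T h" using Suc.prems by simp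
  define tk where "tk = real k * h"
  have tkT: "tk \<in> {0..T}"
  proof -
    have "real k * h \<le> real (gridN T h) * h" using hp kN by (intro mult_right_mono) auto
    thus ?thesis unfolding tk_def using TN hp by simp
  qed
  define jj where "jj = gridN T h - k"
  have jjT: "real jj * h \<le> T"
  proof -
    have "real jj * h \<le> real (gridN T h) * h" using hp unfolding jj_def by (intro mult_right_mono) auto
    thus ?thesis using TN by simp
  qed
  define w where "w = interp \<rho> (hjb \<rho> h T \<sigma> F G \<mu> jj)"
  define Dv where "Dv x = deriv (\<lambda>z. veps \<phi> \<epsilon> \<rho> h T \<sigma> F G \<mu> z tk) x" for x
  have vc: "(\<lambda>z. veps \<phi> \<epsilon> \<rho> h T \<sigma> F G \<mu> z tk) = cv \<phi> \<epsilon> w"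
    unfolding tk_def w_def jj_def by (rule ext) (rule veps_cv[OF hp])
  have Dvb: "\<bar>Dv x\<bar> \<le> Md'" for x
  proof -
    obtain D where D: "(cv \<phi> \<epsilon> w has_real_derivative D) (at x)" "\<bar>D\<bar> \<le> Md T K \<epsilon> R Pm"
      using dvb0[OF jjT, where x=x] unfolding w_def by blast
    thus ?thesis unfolding Dv_def vc Md'_eq using DERIV_imp_deriv[OF D(1)] by simp
  qed
  have Dvd: "Dv (x + \<rho>) - Dv x \<le> C0' * \<rho>" for x
    using dvd0[OF jjT, where x=x] unfolding Dv_def vc w_def C0'_eq .
  have sb: "\<bar>\<sigma> tk\<bar> \<le> S\<sigma>" using S\<sigma>[OF tkT] .
  define \<Psi>p where "\<Psi>p j = of_int j * \<rho> - h * Dv (of_int j * \<rho>) + sqrt h * \<sigma> tk" for j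
  define \<Psi>m where "\<Psi>m j = of_int j * \<rho> - h * Dv (of_int j * \<rho>) - sqrt h * \<sigma> tk" for j
  have hD: "\<bar>h * Dv y\<bar> \<le> h * Md'" for y using Dvb[of y] hp by (simp add: abs_mult)
  have sD: "\<bar>sqrt h * \<sigma> tk\<bar> \<le> sqrt h * S\<sigma>" using sb hp by (simp add: abs_mult mult_left_mono)
  have Dp: "\<bar>\<Psi>p j - of_int j * \<rho>\<bar> \<le> D0" for j
    unfolding \<Psi>p_def D0_def using hD[of "of_int j * \<rho>"] sD unfolding abs_le_iff by linarith
  have Dm: "\<bar>\<Psi>m j - of_int j * \<rho>\<bar> \<le> D0" for j
    unfolding \<Psi>m_def D0_def using hD[of "of_int j * \<rho>"] sD unfolding abs_le_iff by linarith
  have xi: "of_int (j+1) * \<rho> = of_int j * \<rho> + \<rho>" for j by (simp add: algebra_simps)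
  have hd: "h * (Dv (of_int j * \<rho> + \<rho>) - Dv (of_int j * \<rho>)) \<le> h * (C0' * \<rho>)" for j
    using Dvd[of "of_int j * \<rho>"] hp by (intro mult_left_mono) auto
  have spp: "\<Psi>p (j+1) - \<Psi>p j \<ge> \<rho> - h * C0' * \<rho>" for j
    unfolding \<Psi>p_def xi using hd[of j] by (simp add: algebra_simps)
  have spm: "\<Psi>m (j+1) - \<Psi>m j \<ge> \<rho> - h * C0' * \<rho>" for j
    unfolding \<Psi>m_def xi using hd[of j] by (simp add: algebra_simps)
  have IH: "0 \<le> fp \<phi> \<epsilon> \<rho> h T \<sigma> F G m0 \<mu> k j \<and> fp \<phi> \<epsilon> \<rho> h T \<sigma> F G m0 \<mu> k j \<le> Af ^ k * (\<rho> * B0)" for j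
    using Suc.IH[of j] Suc.prems by simp
  have eq: "fp \<phi> \<epsilon> \<rho> h T \<sigma> F G m0 \<mu> (Suc k) i
     = (1/2) * infsum (\<lambda>j. (hat \<rho> i (\<Psi>p j) + hat \<rho> i (\<Psi>m j)) * fp \<phi> \<epsilon> \<rho> h T \<sigma> F G m0 \<mu> k j) UNIV"
    unfolding \<Psi>p_def \<Psi>m_def Dv_def tk_def by (simp add: Let_def)
  note st = fp_step_bound[OF rp IH Dp Dm A_bound[OF Dp spp] A_bound[OF Dm spm]]
  show ?case unfolding eq using st by (simp add: mult.assoc)
qed


lemma dg_bound:
  assumes "k \<le> gridN T h + 1"
  shows "\<bar>dens_grid \<phi> \<epsilon> \<rho> h T \<sigma> F G m0 \<mu> k x\<bar> \<le> 3 * Af ^ (gridN T h + 1) * B0"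
proof -
  define M where "M = Af ^ (gridN T h + 1) * (\<rho> * B0)"
  define f where "f = fp \<phi> \<epsilon> \<rho> h T \<sigma> F G m0 \<mu> k"
  have fb: "0 \<le> f i \<and> f i \<le> M" for i
  proof -
    have "Af ^ k \<le> Af ^ (gridN T h + 1)" using Af_ge1 assms by (intro power_increasing) auto
    hence "Af ^ k * (\<rho> * B0) \<le> M" unfolding M_def using rp B0 by (intro mult_right_mono) auto
    thus ?thesis using fp_bound[OF assms, of i] unfolding f_def by simp
  qed
  define i0 where "i0 = \<lfloor>x/\<rho>\<rfloor>"
  define Bx where "Bx = {i0 - 1 .. i0 + 1}"
  have sup: "i \<in> Bx" if "indicator {of_int i * \<rho> - \<rho> / 2 .. of_int i * \<rho> + \<rho> / 2} x \<noteq> (0::real)" for i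
  proof -
    have "x \<in> {of_int i * \<rho> - \<rho> / 2 .. of_int i * \<rho> + \<rho> / 2}" using that by (auto simp: indicator_def split: if_splits)
    hence "of_int i * \<rho> - \<rho> / 2 \<le> x" "x \<le> of_int i * \<rho> + \<rho> / 2" by auto
    hence "(of_int i - 1/2) * \<rho> \<le> x" "x \<le> (of_int i + 1/2) * \<rho>" by (simp_all add: algebra_simps)
    hence "of_int i - 1/2 \<le> x / \<rho>" "x / \<rho> \<le> of_int i + 1/2" using rp by (simp_all add: pos_le_divide_eq pos_divide_le_eq)
    moreover have "of_int i0 \<le> x / \<rho>" "x / \<rho> < of_int i0 + 1" unfolding i0_def by linarith+
    ultimately have "of_int i0 - 1 < real_of_int i" "real_of_int i < of_int i0 + 2" by linarith+
    hence "i0 - 1 < i" "i < i0 + 2" by linarith+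
    thus ?thesis unfolding Bx_def by simp
  qed
  have eq: "infsum (\<lambda>i. f i * indicator {of_int i * \<rho> - \<rho> / 2 .. of_int i * \<rho> + \<rho> / 2} x) UNIV
      = (\<Sum>i\<in>Bx. f i * indicator {of_int i * \<rho> - \<rho> / 2 .. of_int i * \<rho> + \<rho> / 2} x)"
  proof -
    have "infsum (\<lambda>i. f i * indicator {of_int i * \<rho> - \<rho> / 2 .. of_int i * \<rho> + \<rho> / 2} x) UNIV
       = infsum (\<lambda>i. f i * indicator {of_int i * \<rho> - \<rho> / 2 .. of_int i * \<rho> + \<rho> / 2} x) Bx"
    proof (rule infsum_cong_neutral)
      fix i assume "i \<in> UNIV - Bx"
      hence "indicator {of_int i * \<rho> - \<rho> / 2 .. of_int i * \<rho> + \<rho> / 2} x = (0::real)" using sup by blast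
      thus "f i * indicator {of_int i * \<rho> - \<rho> / 2 .. of_int i * \<rho> + \<rho> / 2} x = 0" by simp
    qed auto
    also have "\<dots> = (\<Sum>i\<in>Bx. f i * indicator {of_int i * \<rho> - \<rho> / 2 .. of_int i * \<rho> + \<rho> / 2} x)"
      by (rule infsum_finite) (simp add: Bx_def)
    finally show ?thesis .
  qed
  have s0: "0 \<le> (\<Sum>i\<in>Bx. f i * indicator {of_int i * \<rho> - \<rho> / 2 .. of_int i * \<rho> + \<rho> / 2} x)"
    using fb by (intro sum_nonneg) simp
  have "(\<Sum>i\<in>Bx. f i * indicator {of_int i * \<rho> - \<rho> / 2 .. of_int i * \<rho> + \<rho> / 2} x) \<le> (\<Sum>i\<in>Bx. M)"
  proof (rule sum_mono)
    fix i
    have "f i * indicator {of_int i * \<rho> - \<rho> / 2 .. of_int i * \<rho> + \<rho> / 2} x \<le> f i * 1"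
      using fb[of i] by (intro mult_left_mono) (auto simp: indicator_def)
    thus "f i * indicator {of_int i * \<rho> - \<rho> / 2 .. of_int i * \<rho> + \<rho> / 2} x \<le> M" using fb[of i] by simp
  qed
  also have "\<dots> = 3 * M" unfolding Bx_def by simp
  finally have s1: "(\<Sum>i\<in>Bx. f i * indicator {of_int i * \<rho> - \<rho> / 2 .. of_int i * \<rho> + \<rho> / 2} x) \<le> 3 * M" .
  have dg: "dens_grid \<phi> \<epsilon> \<rho> h T \<sigma> F G m0 \<mu> k x = (1/\<rho>) * (\<Sum>i\<in>Bx. f i * indicator {of_int i * \<rho> - \<rho> / 2 .. of_int i * \<rho> + \<rho> / 2} x)"
    unfolding dens_grid_def f_def[symmetric] eq ..
  have "(1/\<rho>) * (\<Sum>i\<in>Bx. f i * indicator {of_int i * \<rho> - \<rho> / 2 .. of_int i * \<rho> + \<rho> / 2} x) \<le> (1/\<rho>) * (3 * M)"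
    using s1 rp by (intro mult_left_mono) auto
  also have "(1/\<rho>) * (3 * M) = 3 * Af ^ (gridN T h + 1) * B0" unfolding M_def using rp by (simp add: field_simps)
  finally show ?thesis unfolding dg using s0 rp by simp
qed

lemma dens_bound:
  assumes t: "t \<in> {0..T}"
  shows "\<bar>dens \<phi> \<epsilon> \<rho> h T \<sigma> F G m0 \<mu> t x\<bar> \<le> 3 * Af ^ (gridN T h + 1) * B0"
proof -
  define k where "k = nat \<lfloor>t / h\<rfloor>"
  define Q where "Q = 3 * Af ^ (gridN T h + 1) * B0"
  have th0: "t / h \<ge> 0" using t hp by simp
  have k1: "real k \<le> t / h" "t / h < real k + 1" unfolding k_def using th0 by linarith+
  have k2: "real k * h \<le> t" "t < (real k + 1) * h"
    using k1 by (simp_all only: pos_le_divide_eq[OF hp] pos_divide_less_eq[OF hp])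
  have "t \<le> real (gridN T h) * h" using t TN by simp
  hence "t / h \<le> real (gridN T h)" by (simp only: pos_divide_le_eq[OF hp])
  hence kN: "k \<le> gridN T h" using k1 by linarith
  define a1 where "a1 = (real (Suc k) * h - t) / h"
  define a2 where "a2 = (t - real k * h) / h"
  have a: "0 \<le> a1" "0 \<le> a2" "a1 + a2 = 1"
  proof -
    have "t \<le> real (Suc k) * h" using k2(2) by (simp add: add.commute)
    thus "0 \<le> a1" unfolding a1_def using hp by (intro divide_nonneg_pos) auto
    show "0 \<le> a2" unfolding a2_def using k2 hp by (intro divide_nonneg_pos) auto
    have "a1 + a2 = ((real (Suc k) * h - t) + (t - real k * h)) / h" unfolding a1_def a2_def by (rule add_divide_distrib[symmetric])
    also have "(real (Suc k) * h - t) + (t - real k * h) = h" by (simp add: algebra_simps)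
    finally show "a1 + a2 = 1" using hp by simp
  qed
  have d: "dens \<phi> \<epsilon> \<rho> h T \<sigma> F G m0 \<mu> t x = a1 * dens_grid \<phi> \<epsilon> \<rho> h T \<sigma> F G m0 \<mu> k x + a2 * dens_grid \<phi> \<epsilon> \<rho> h T \<sigma> F G m0 \<mu> (Suc k) x"
    unfolding dens_def k_def[symmetric] a1_def a2_def Let_def ..
  have b1: "\<bar>a1 * dens_grid \<phi> \<epsilon> \<rho> h T \<sigma> F G m0 \<mu> k x\<bar> \<le> a1 * Q"
  proof -
    have "\<bar>dens_grid \<phi> \<epsilon> \<rho> h T \<sigma> F G m0 \<mu> k x\<bar> \<le> Q" using dg_bound[of k x] kN unfolding Q_def by simp
    thus ?thesis using a by (simp add: abs_mult mult_left_mono)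
  qed
  have b2: "\<bar>a2 * dens_grid \<phi> \<epsilon> \<rho> h T \<sigma> F G m0 \<mu> (Suc k) x\<bar> \<le> a2 * Q"
  proof -
    have "\<bar>dens_grid \<phi> \<epsilon> \<rho> h T \<sigma> F G m0 \<mu> (Suc k) x\<bar> \<le> Q" using dg_bound[of "Suc k" x] kN unfolding Q_def by simp
    thus ?thesis using a by (simp add: abs_mult mult_left_mono)
  qed
  have "\<bar>dens \<phi> \<epsilon> \<rho> h T \<sigma> F G m0 \<mu> t x\<bar> \<le> a1 * Q + a2 * Q" unfolding d using b1 b2 by linarith
  also have "\<dots> = (a1 + a2) * Q" by (rule distrib_right[symmetric])
  also have "\<dots> = Q" using a(3) by simp
  finally show ?thesis unfolding Q_def .
qed


lemma dens_bound':
  assumes t: "t \<in> {0..T}"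
  shows "\<bar>dens \<phi> \<epsilon> \<rho> h T \<sigma> F G m0 \<mu> t x\<bar> \<le> 3 * Afac \<rho> h \<epsilon> K T R Pm S\<sigma> ^ (gridN T h + 1) * B0"
  using dens_bound[OF t] unfolding Af_def .

end

lemma C2_mono: "C2_bdd f a \<Longrightarrow> a \<le> b \<Longrightarrow> C2_bdd f b"
  unfolding C2_bdd_def by (meson order_trans)

theorem proposition4p7:
  fixes T :: real and F G :: "real \<Rightarrow> real measure \<Rightarrow> real" and \<sigma> :: "real \<Rightarrow> real"
    and m0 :: "real measure" and \<phi> :: "real \<Rightarrow> real"
    and \<rho>s hs \<epsilon>s :: "nat \<Rightarrow> real"
  assumes "T > 0"
    and "assumption_A1 T F G \<sigma> m0"
    and "mollifier \<phi>"
    and "\<And>n. \<rho>s n > 0" and "\<And>n. hs n > 0" and "\<And>n. \<epsilon>s n > 0"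
    and "\<rho>s \<longlonglongrightarrow> 0" and "hs \<longlonglongrightarrow> 0" and "\<epsilon>s \<longlonglongrightarrow> 0"
    and "\<And>n. T / hs n \<in> \<nat>"
  shows "\<exists>c>0. \<forall>n. \<forall>\<mu>. cont_P1 T \<mu> \<longrightarrow> (\<forall>t\<in>{0..T}.
           AE x in lborel. \<bar>dens \<phi> (\<epsilon>s n) (\<rho>s n) (hs n) T \<sigma> F G m0 \<mu> t x\<bar> \<le> c)"
proof -
  have T0: "T \<ge> 0" using assms(1) by simp
  from assms(2) obtain K0 where K0: "\<And>m. m \<in> P1 \<Longrightarrow> (\<forall>x. \<bar>F x m\<bar> \<le> K0 \<and> \<bar>G x m\<bar> \<le> K0)
             \<and> C2_bdd (\<lambda>x. F x m) K0 \<and> C2_bdd (\<lambda>x. G x m) K0"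
    unfolding assumption_A1_def by blast
  from assms(2) have \<sigma>c: "continuous_on {0..T} \<sigma>" unfolding assumption_A1_def by blast
  from assms(2) obtain f0 B where f0m: "f0 \<in> borel_measurable borel"
    and m0d: "m0 = density lborel (\<lambda>x. ennreal (f0 x))" and f0B': "AE x in lborel. f0 x \<le> B"
    unfolding assumption_A1_def by blast
  define K where "K = max K0 0"
  have Kb: "(\<forall>x. \<bar>F x m\<bar> \<le> K \<and> \<bar>G x m\<bar> \<le> K) \<and> C2_bdd (\<lambda>x. F x m) K \<and> C2_bdd (\<lambda>x. G x m) K"
    if "m \<in> P1" for m
  proof -
    have "K0 \<le> K" unfolding K_def by simp
    thus ?thesis using K0[OF that] C2_mono by (meson order_trans)
  qed
  have Kn: "K \<ge> 0" unfolding K_def by simp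
  define B0 where "B0 = max B 0"
  have B0: "B0 \<ge> 0" unfolding B0_def by simp
  have f0B: "AE x in lborel. f0 x \<le> B0" using f0B' by (rule eventually_mono) (simp add: B0_def)
  have "bounded (\<sigma> ` {0..T})" by (rule compact_imp_bounded[OF compact_continuous_image[OF \<sigma>c]]) simp
  then obtain S\<sigma> where S\<sigma>: "\<And>t. t \<in> {0..T} \<Longrightarrow> \<bar>\<sigma> t\<bar> \<le> S\<sigma>" unfolding bounded_real by blast
  obtain R Pm where R0: "R \<ge> 0" and pc: "continuous_on UNIV \<phi>"
    and pd: "\<And>x. (\<phi> has_real_derivative deriv \<phi> x) (at x)" and p'c: "continuous_on UNIV (deriv \<phi>)"
    and ps: "\<And>x. \<bar>x\<bar> > R \<Longrightarrow> \<phi> x = 0" and pn: "\<And>x. \<phi> x \<ge> 0"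
    and pint: "integral\<^sup>L lborel \<phi> = 1" and Pm: "\<And>x. \<bar>deriv \<phi> x\<bar> \<le> Pm"
    using mollifier_facts[OF assms(3)] by blast
  have TN: "real (gridN T (hs n)) * hs n = T" for n
  proof -
    obtain m where m: "T / hs n = of_nat m" using assms(10)[of n] by (auto elim: Nats_cases)
    have "gridN T (hs n) = m" unfolding gridN_def m by simp
    thus ?thesis using m assms(5)[of n] by (simp add: divide_eq_eq)
  qed
  define C where "C = K * (1 + T)"
  have C0: "C \<ge> 0" unfolding C_def using Kn T0 by simp
  define Q where "Q n = 3 * Afac (\<rho>s n) (hs n) (\<epsilon>s n) K T R Pm S\<sigma> ^ (gridN T (hs n) + 1) * B0" for n
  have "eventually (\<lambda>n. hs n < 1 / (3 * (C + 1))) sequentially"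
    by (rule order_tendstoD(2)[OF assms(8)]) (use C0 in simp)
  then obtain N0 where N0: "\<And>n. n \<ge> N0 \<Longrightarrow> hs n < 1 / (3 * (C + 1))" unfolding eventually_sequentially by blast
  have Qbig: "Q n \<le> 3 * exp (2 * C * T + 1) * B0" if "n \<ge> N0" for n
  proof -
    define h where "h = hs n"
    have hp: "h > 0" unfolding h_def using assms(5) .
    have "h * (3 * (C + 1)) < 1" using N0[OF that] C0 unfolding h_def by (simp add: less_divide_eq)
    hence Ch: "C * h \<le> 1/3" using hp C0 by (simp add: algebra_simps)
    have A: "Afac (\<rho>s n) (hs n) (\<epsilon>s n) K T R Pm S\<sigma> = 1 + 2 * C * h"
      unfolding Afac_def C_def[symmetric] h_def[symmetric] using Ch by simp
    have "(1 + 2 * C * h) ^ (gridN T h + 1) \<le> exp (2 * C * h) ^ (gridN T h + 1)"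
      by (rule power_mono) (use C0 hp in \<open>auto simp: exp_ge_add_one_self\<close>)
    also have "\<dots> = exp (real (gridN T h + 1) * (2 * C * h))" by (rule exp_of_nat_mult[symmetric])
    also have "real (gridN T h + 1) * (2 * C * h) = 2 * C * (real (gridN T h) * h) + 2 * C * h"
      by (simp add: algebra_simps)
    also have "\<dots> = 2 * C * T + 2 * C * h" using TN[of n] unfolding h_def by simp
    also have "exp (2 * C * T + 2 * C * h) \<le> exp (2 * C * T + 1)" using Ch by simp
    finally have "(1 + 2 * C * h) ^ (gridN T h + 1) \<le> exp (2 * C * T + 1)" .
    thus ?thesis unfolding Q_def A using B0 unfolding h_def by (simp add: mult_right_mono)
  qed
  define c where "c = max (3 * exp (2 * C * T + 1) * B0) (Max (Q ` {..<N0})) + 1"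
  have cpos: "c > 0" unfolding c_def using B0 by (smt (verit) exp_gt_zero max.cobounded1 mult_nonneg_nonneg)
  have Qc: "Q n \<le> c" for n
  proof (cases "n \<ge> N0")
    case True thus ?thesis using Qbig[OF True] unfolding c_def by linarith
  next
    case False
    hence "Q n \<le> Max (Q ` {..<N0})" by (intro Max_ge) auto
    thus ?thesis unfolding c_def by linarith
  qed
  show ?thesis
  proof (intro exI[of _ c] conjI cpos allI impI ballI)
    fix n \<mu> t assume cP: "cont_P1 T \<mu>" and t: "t \<in> {0..T}"
    have \<mu>P: "\<And>t. t \<in> {0..T} \<Longrightarrow> \<mu> t \<in> P1" using cP unfolding cont_P1_def by blast
    show "AE x in lborel. \<bar>dens \<phi> (\<epsilon>s n) (\<rho>s n) (hs n) T \<sigma> F G m0 \<mu> t x\<bar> \<le> c"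
    proof (rule AE_I2)
      fix x
      have "\<bar>dens \<phi> (\<epsilon>s n) (\<rho>s n) (hs n) T \<sigma> F G m0 \<mu> t x\<bar> \<le> Q n"
        unfolding Q_def
        by (rule dens_bound'[OF assms(4) assms(5) T0 TN Kb \<mu>P pc pd p'c ps pn pint assms(6) Pm R0 S\<sigma> m0d f0m f0B B0 t])
      thus "\<bar>dens \<phi> (\<epsilon>s n) (\<rho>s n) (hs n) T \<sigma> F G m0 \<mu> t x\<bar> \<le> c" using Qc[of n] by linarith
    qed
  qed
qed

end
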